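(* Let $\mathcal{A}$ be an additive category, $X$ an object of $\mathcal{A}$ with an action of a finite group $G$, and $H\subset G$ a subgroup such that the index $|G|/|H|$ is invertible in all Hom-groups of $\mathcal{A}$. Assume that the categorical quotients $X/L$ exist for all subgroups $L\subset G$. Then the fork diagram $$\partial_0,\partial_1:\bigoplus_{g\in G}X/(H\cap g^{-1}Hg)\rightrightarrows X/H\xrightarrow{e}X/G,$$ with $\partial_0=\bigoplus_{g}p_{H\cap g^{-1}Hg,H}$, $\partial_1=\bigoplus_gp_{H\cap g^{-1}Hg,H,g}$ and $e=p_{H,G}$, is a split fork diagram; in particular it is an absolute coequalizer diagram.
   Context: For $g\in G$, $[g]:X\to X$ denotes the corresponding automorphism, and for a subgroup $L$, $p_L:X\to X/L$ is the projection to the categorical quotient (the universal $L$-invariant morphism out of $X$). For subgroups $L,M\subset G$ and $g\in G$ with $gLg^{-1}\subset M$, $p_{L,M,g}:X/L\to X/M$ is the unique morphism with $p_{L,M,g}\circ p_L=p_M\circ[g]$; $p_{L,M}=p_{L,M,1}$. A fork $\partial_0,\partial_1:A\rightrightarrows B\xrightarrow{e}Z$ is split if $e\partial_0=e\partial_1$ and there exist $s:Z\to B$ and $t:B\to A$ with $es=\mathrm{Id}_Z$, $\partial_0t=\mathrm{Id}_B$, $\partial_1t=se$ (Mac Lane). *)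

theory Defs
  imports "HOL-Algebra.Group"
begin

record ('o, 'm) addcat =
  cObj  :: "'o set"
  cHom  :: "'o \<Rightarrow> 'o \<Rightarrow> 'm set"
  cId   :: "'o \<Rightarrow> 'm"
  cComp :: "'m \<Rightarrow> 'm \<Rightarrow> 'm"   (* cComp g f = g o f *)
  cAdd  :: "'o \<Rightarrow> 'o \<Rightarrow> 'm \<Rightarrow> 'm \<Rightarrow> 'm"
  cZero :: "'o \<Rightarrow> 'o \<Rightarrow> 'm"

definition category :: "('o, 'm, 'x) addcat_scheme \<Rightarrow> bool" where
  "category C \<longleftrightarrow>
    (\<forall>A\<in>cObj C. cId C A \<in> cHom C A A) \<and>
    (\<forall>A\<in>cObj C. \<forall>B\<in>cObj C. \<forall>D\<in>cObj C. \<forall>f\<in>cHom C A B. \<forall>g\<in>cHom C B D.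
        cComp C g f \<in> cHom C A D) \<and>
    (\<forall>A\<in>cObj C. \<forall>B\<in>cObj C. \<forall>D\<in>cObj C. \<forall>E\<in>cObj C.
       \<forall>f\<in>cHom C A B. \<forall>g\<in>cHom C B D. \<forall>h\<in>cHom C D E.
        cComp C h (cComp C g f) = cComp C (cComp C h g) f) \<and>
    (\<forall>A\<in>cObj C. \<forall>B\<in>cObj C. \<forall>f\<in>cHom C A B.
        cComp C f (cId C A) = f \<and> cComp C (cId C B) f = f)"

definition preadditive :: "('o, 'm, 'x) addcat_scheme \<Rightarrow> bool" where
  "preadditive C \<longleftrightarrow> category C \<and>
    (\<forall>A\<in>cObj C. \<forall>B\<in>cObj C.
       cZero C A B \<in> cHom C A B \<and>
       (\<forall>f\<in>cHom C A B. \<forall>g\<in>cHom C A B. cAdd C A B f g \<in> cHom C A B) \<and>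
       (\<forall>f\<in>cHom C A B. \<forall>g\<in>cHom C A B. \<forall>h\<in>cHom C A B.
           cAdd C A B (cAdd C A B f g) h = cAdd C A B f (cAdd C A B g h)) \<and>
       (\<forall>f\<in>cHom C A B. \<forall>g\<in>cHom C A B. cAdd C A B f g = cAdd C A B g f) \<and>
       (\<forall>f\<in>cHom C A B. cAdd C A B (cZero C A B) f = f) \<and>
       (\<forall>f\<in>cHom C A B. \<exists>g\<in>cHom C A B. cAdd C A B f g = cZero C A B)) \<and>
    (\<forall>A\<in>cObj C. \<forall>B\<in>cObj C. \<forall>D\<in>cObj C.
       \<forall>f\<in>cHom C A B. \<forall>f'\<in>cHom C A B. \<forall>g\<in>cHom C B D.
         cComp C g (cAdd C A B f f') = cAdd C A D (cComp C g f) (cComp C g f')) \<and>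
    (\<forall>A\<in>cObj C. \<forall>B\<in>cObj C. \<forall>D\<in>cObj C.
       \<forall>f\<in>cHom C A B. \<forall>g\<in>cHom C B D. \<forall>g'\<in>cHom C B D.
         cComp C (cAdd C B D g g') f = cAdd C A D (cComp C g f) (cComp C g' f))"

definition additive_category :: "('o, 'm, 'x) addcat_scheme \<Rightarrow> bool" where
  "additive_category C \<longleftrightarrow> preadditive C \<and>
    (\<exists>Z\<in>cObj C. \<forall>A\<in>cObj C. cHom C Z A = {cZero C Z A} \<and> cHom C A Z = {cZero C A Z}) \<and>
    (\<forall>A\<in>cObj C. \<forall>B\<in>cObj C. \<exists>P\<in>cObj C.
       \<exists>i1\<in>cHom C A P. \<exists>i2\<in>cHom C B P. \<exists>p1\<in>cHom C P A. \<exists>p2\<in>cHom C P B.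
         cComp C p1 i1 = cId C A \<and> cComp C p2 i2 = cId C B \<and>
         cComp C p1 i2 = cZero C B A \<and> cComp C p2 i1 = cZero C A B \<and>
         cAdd C P P (cComp C i1 p1) (cComp C i2 p2) = cId C P)"

definition nsmul :: "('o, 'm, 'x) addcat_scheme \<Rightarrow> 'o \<Rightarrow> 'o \<Rightarrow> nat \<Rightarrow> 'm \<Rightarrow> 'm" where
  "nsmul C A B n f = ((cAdd C A B f) ^^ n) (cZero C A B)"

definition invertible_in_homs :: "('o, 'm, 'x) addcat_scheme \<Rightarrow> nat \<Rightarrow> bool" where
  "invertible_in_homs C n \<longleftrightarrow>
    (\<forall>A\<in>cObj C. \<forall>B\<in>cObj C. bij_betw (nsmul C A B n) (cHom C A B) (cHom C A B))"

definition group_action_obj ::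
  "('o, 'm, 'x) addcat_scheme \<Rightarrow> ('g, 'b) monoid_scheme \<Rightarrow> 'o \<Rightarrow> ('g \<Rightarrow> 'm) \<Rightarrow> bool" where
  "group_action_obj C G X act \<longleftrightarrow> X \<in> cObj C \<and>
    (\<forall>g\<in>carrier G. act g \<in> cHom C X X) \<and>
    act \<one>\<^bsub>G\<^esub> = cId C X \<and>
    (\<forall>g\<in>carrier G. \<forall>h\<in>carrier G. act (g \<otimes>\<^bsub>G\<^esub> h) = cComp C (act g) (act h))"

definition is_cat_quotient ::
  "('o, 'm, 'x) addcat_scheme \<Rightarrow> 'o \<Rightarrow> ('g \<Rightarrow> 'm) \<Rightarrow> 'g set \<Rightarrow> 'o \<Rightarrow> 'm \<Rightarrow> bool" where
  "is_cat_quotient C X act L Y q \<longleftrightarrow> Y \<in> cObj C \<and> q \<in> cHom C X Y \<and>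
    (\<forall>l\<in>L. cComp C q (act l) = q) \<and>
    (\<forall>Z\<in>cObj C. \<forall>f\<in>cHom C X Z. (\<forall>l\<in>L. cComp C f (act l) = f) \<longrightarrow>
        (\<exists>!u. u \<in> cHom C Y Z \<and> cComp C u q = f))"

text \<open>p_{L,M,g}: the unique morphism X/L \<rightarrow> X/M with p_{L,M,g} o p_L = p_M o [g].\<close>
definition qmap ::
  "('o, 'm, 'x) addcat_scheme \<Rightarrow> ('g \<Rightarrow> 'm) \<Rightarrow> ('g set \<Rightarrow> 'o) \<Rightarrow> ('g set \<Rightarrow> 'm)
     \<Rightarrow> 'g set \<Rightarrow> 'g set \<Rightarrow> 'g \<Rightarrow> 'm" where
  "qmap C act Q p L M g = (THE u. u \<in> cHom C (Q L) (Q M) \<and> cComp C u (p L) = cComp C (p M) (act g))"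

definition conj_sub :: "('g, 'b) monoid_scheme \<Rightarrow> 'g \<Rightarrow> 'g set \<Rightarrow> 'g set" where
  "conj_sub G g H = {inv\<^bsub>G\<^esub> g \<otimes>\<^bsub>G\<^esub> h \<otimes>\<^bsub>G\<^esub> g | h. h \<in> H}"

definition is_coproduct ::
  "('o, 'm, 'x) addcat_scheme \<Rightarrow> 'i set \<Rightarrow> ('i \<Rightarrow> 'o) \<Rightarrow> 'o \<Rightarrow> ('i \<Rightarrow> 'm) \<Rightarrow> bool" where
  "is_coproduct C I Y P \<iota> \<longleftrightarrow> P \<in> cObj C \<and> (\<forall>i\<in>I. \<iota> i \<in> cHom C (Y i) P) \<and>
    (\<forall>Z\<in>cObj C. \<forall>f. (\<forall>i\<in>I. f i \<in> cHom C (Y i) Z) \<longrightarrow>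
        (\<exists>!u. u \<in> cHom C P Z \<and> (\<forall>i\<in>I. cComp C u (\<iota> i) = f i)))"

definition split_fork ::
  "('o, 'm, 'x) addcat_scheme \<Rightarrow> 'o \<Rightarrow> 'o \<Rightarrow> 'o \<Rightarrow> 'm \<Rightarrow> 'm \<Rightarrow> 'm \<Rightarrow> bool" where
  "split_fork C A B Z d0 d1 e \<longleftrightarrow>
    d0 \<in> cHom C A B \<and> d1 \<in> cHom C A B \<and> e \<in> cHom C B Z \<and>
    cComp C e d0 = cComp C e d1 \<and>
    (\<exists>s\<in>cHom C Z B. \<exists>t\<in>cHom C B A.
       cComp C e s = cId C Z \<and> cComp C d0 t = cId C B \<and> cComp C d1 t = cComp C s e)"

end

theory Submission
  imports Defs "HOL-Algebra.FiniteProduct" "HOL-Algebra.Coset"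
begin

definition HM :: "('o,'m,'x) addcat_scheme \<Rightarrow> 'o \<Rightarrow> 'o \<Rightarrow> 'm monoid" where
  "HM C A B = \<lparr>carrier = cHom C A B, mult = cAdd C A B, one = cZero C A B\<rparr>"

lemma HM_simps [simp]: "carrier (HM C A B) = cHom C A B" "mult (HM C A B) = cAdd C A B"
  "one (HM C A B) = cZero C A B"
  by (simp_all add: HM_def)

lemma pre_D:
  assumes "preadditive C"
  shows "category C"
   and "\<forall>A\<in>cObj C. \<forall>B\<in>cObj C.
       cZero C A B \<in> cHom C A B \<and>
       (\<forall>f\<in>cHom C A B. \<forall>g\<in>cHom C A B. cAdd C A B f g \<in> cHom C A B) \<and>
       (\<forall>f\<in>cHom C A B. \<forall>g\<in>cHom C A B. \<forall>h\<in>cHom C A B.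
           cAdd C A B (cAdd C A B f g) h = cAdd C A B f (cAdd C A B g h)) \<and>
       (\<forall>f\<in>cHom C A B. \<forall>g\<in>cHom C A B. cAdd C A B f g = cAdd C A B g f) \<and>
       (\<forall>f\<in>cHom C A B. cAdd C A B (cZero C A B) f = f) \<and>
       (\<forall>f\<in>cHom C A B. \<exists>g\<in>cHom C A B. cAdd C A B f g = cZero C A B)"
   and "\<forall>A\<in>cObj C. \<forall>B\<in>cObj C. \<forall>D\<in>cObj C.
       \<forall>f\<in>cHom C A B. \<forall>f'\<in>cHom C A B. \<forall>g\<in>cHom C B D.
         cComp C g (cAdd C A B f f') = cAdd C A D (cComp C g f) (cComp C g f')"
   and "\<forall>A\<in>cObj C. \<forall>B\<in>cObj C. \<forall>D\<in>cObj C.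
       \<forall>f\<in>cHom C A B. \<forall>g\<in>cHom C B D. \<forall>g'\<in>cHom C B D.
         cComp C (cAdd C B D g g') f = cAdd C A D (cComp C g f) (cComp C g' f)"
proof -
  note P = assms[unfolded preadditive_def]
  show "category C" using conjunct1[OF P] .
  show "\<forall>A\<in>cObj C. \<forall>B\<in>cObj C.
       cZero C A B \<in> cHom C A B \<and>
       (\<forall>f\<in>cHom C A B. \<forall>g\<in>cHom C A B. cAdd C A B f g \<in> cHom C A B) \<and>
       (\<forall>f\<in>cHom C A B. \<forall>g\<in>cHom C A B. \<forall>h\<in>cHom C A B.
           cAdd C A B (cAdd C A B f g) h = cAdd C A B f (cAdd C A B g h)) \<and>
       (\<forall>f\<in>cHom C A B. \<forall>g\<in>cHom C A B. cAdd C A B f g = cAdd C A B g f) \<and>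
       (\<forall>f\<in>cHom C A B. cAdd C A B (cZero C A B) f = f) \<and>
       (\<forall>f\<in>cHom C A B. \<exists>g\<in>cHom C A B. cAdd C A B f g = cZero C A B)"
    using conjunct1[OF conjunct2[OF P]] .
  show "\<forall>A\<in>cObj C. \<forall>B\<in>cObj C. \<forall>D\<in>cObj C.
       \<forall>f\<in>cHom C A B. \<forall>f'\<in>cHom C A B. \<forall>g\<in>cHom C B D.
         cComp C g (cAdd C A B f f') = cAdd C A D (cComp C g f) (cComp C g f')"
    using conjunct1[OF conjunct2[OF conjunct2[OF P]]] .
  show "\<forall>A\<in>cObj C. \<forall>B\<in>cObj C. \<forall>D\<in>cObj C.
       \<forall>f\<in>cHom C A B. \<forall>g\<in>cHom C B D. \<forall>g'\<in>cHom C B D.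
         cComp C (cAdd C B D g g') f = cAdd C A D (cComp C g f) (cComp C g' f)"
    using conjunct2[OF conjunct2[OF conjunct2[OF P]]] .
qed

lemma cat_D:
  assumes "category C"
  shows "\<forall>A\<in>cObj C. cId C A \<in> cHom C A A"
   and "\<forall>A\<in>cObj C. \<forall>B\<in>cObj C. \<forall>D\<in>cObj C. \<forall>f\<in>cHom C A B. \<forall>g\<in>cHom C B D.
        cComp C g f \<in> cHom C A D"
   and "\<forall>A\<in>cObj C. \<forall>B\<in>cObj C. \<forall>D\<in>cObj C. \<forall>E\<in>cObj C.
       \<forall>f\<in>cHom C A B. \<forall>g\<in>cHom C B D. \<forall>h\<in>cHom C D E.
        cComp C h (cComp C g f) = cComp C (cComp C h g) f"
   and "\<forall>A\<in>cObj C. \<forall>B\<in>cObj C. \<forall>f\<in>cHom C A B.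
        cComp C f (cId C A) = f \<and> cComp C (cId C B) f = f"
proof -
  note P = assms[unfolded category_def]
  show "\<forall>A\<in>cObj C. cId C A \<in> cHom C A A" using conjunct1[OF P] .
  show "\<forall>A\<in>cObj C. \<forall>B\<in>cObj C. \<forall>D\<in>cObj C. \<forall>f\<in>cHom C A B. \<forall>g\<in>cHom C B D.
        cComp C g f \<in> cHom C A D" using conjunct1[OF conjunct2[OF P]] .
  show "\<forall>A\<in>cObj C. \<forall>B\<in>cObj C. \<forall>D\<in>cObj C. \<forall>E\<in>cObj C.
       \<forall>f\<in>cHom C A B. \<forall>g\<in>cHom C B D. \<forall>h\<in>cHom C D E.
        cComp C h (cComp C g f) = cComp C (cComp C h g) f"
    using conjunct1[OF conjunct2[OF conjunct2[OF P]]] .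
  show "\<forall>A\<in>cObj C. \<forall>B\<in>cObj C. \<forall>f\<in>cHom C A B.
        cComp C f (cId C A) = f \<and> cComp C (cId C B) f = f"
    using conjunct2[OF conjunct2[OF conjunct2[OF P]]] .
qed

lemma HM_comm_group:
  assumes "preadditive C" "A \<in> cObj C" "B \<in> cObj C"
  shows "comm_group (HM C A B)"
proof -
  note P = bspec[OF bspec[OF pre_D(2)[OF assms(1)] assms(2)] assms(3)]
  note P1 = conjunct1[OF P]
  note P2 = conjunct1[OF conjunct2[OF P], rule_format]
  note P3 = conjunct1[OF conjunct2[OF conjunct2[OF P]], rule_format]
  note P4 = conjunct1[OF conjunct2[OF conjunct2[OF conjunct2[OF P]]], rule_format]
  note P5 = conjunct1[OF conjunct2[OF conjunct2[OF conjunct2[OF conjunct2[OF P]]]], rule_format]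
  note P6 = conjunct2[OF conjunct2[OF conjunct2[OF conjunct2[OF conjunct2[OF P]]]], rule_format]
  show ?thesis
  proof (rule comm_groupI)
    fix x assume x: "x \<in> carrier (HM C A B)"
    then obtain y where y: "y \<in> cHom C A B" "cAdd C A B x y = cZero C A B" using P6[of x] by auto
    have "cAdd C A B y x = cZero C A B" using y x P4[of x y] by simp
    then show "\<exists>y\<in>carrier (HM C A B). y \<otimes>\<^bsub>HM C A B\<^esub> x = \<one>\<^bsub>HM C A B\<^esub>"
      using y by auto
  next
    fix x y z assume "x \<in> carrier (HM C A B)" "y \<in> carrier (HM C A B)" "z \<in> carrier (HM C A B)"
    then show "x \<otimes>\<^bsub>HM C A B\<^esub> y \<otimes>\<^bsub>HM C A B\<^esub> z = x \<otimes>\<^bsub>HM C A B\<^esub> (y \<otimes>\<^bsub>HM C A B\<^esub> z)"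
      using P3 by simp
  next
    fix x y assume "x \<in> carrier (HM C A B)" "y \<in> carrier (HM C A B)"
    then show "x \<otimes>\<^bsub>HM C A B\<^esub> y = y \<otimes>\<^bsub>HM C A B\<^esub> x"
      using P4 by simp
  next
    fix x assume "x \<in> carrier (HM C A B)"
    then show "\<one>\<^bsub>HM C A B\<^esub> \<otimes>\<^bsub>HM C A B\<^esub> x = x" using P5 by simp
  qed (simp_all add: P1 P2)
qed

lemma pre_basic:
  assumes "preadditive C" "A \<in> cObj C" "B \<in> cObj C"
  shows "cZero C A B \<in> cHom C A B"
    and "f \<in> cHom C A B \<Longrightarrow> g \<in> cHom C A B \<Longrightarrow> cAdd C A B f g \<in> cHom C A B"
    and "f \<in> cHom C A B \<Longrightarrow> cAdd C A B (cZero C A B) f = f"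
proof -
  note P = bspec[OF bspec[OF pre_D(2)[OF assms(1)] assms(2)] assms(3)]
  show "cZero C A B \<in> cHom C A B" by (rule conjunct1[OF P])
  show "f \<in> cHom C A B \<Longrightarrow> g \<in> cHom C A B \<Longrightarrow> cAdd C A B f g \<in> cHom C A B"
    by (rule conjunct1[OF conjunct2[OF P], rule_format])
  show "f \<in> cHom C A B \<Longrightarrow> cAdd C A B (cZero C A B) f = f"
    by (rule conjunct1[OF conjunct2[OF conjunct2[OF conjunct2[OF conjunct2[OF P]]]], rule_format])
qed

lemma HM_cm: "preadditive C \<Longrightarrow> A \<in> cObj C \<Longrightarrow> B \<in> cObj C \<Longrightarrow> comm_monoid (HM C A B)"
  by (rule comm_group.axioms(1)[OF HM_comm_group])

lemma cat_facts:
  assumes "preadditive C"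
  shows "A \<in> cObj C \<Longrightarrow> cId C A \<in> cHom C A A"
    and "A \<in> cObj C \<Longrightarrow> B \<in> cObj C \<Longrightarrow> D \<in> cObj C \<Longrightarrow> f \<in> cHom C A B \<Longrightarrow> g \<in> cHom C B D \<Longrightarrow> cComp C g f \<in> cHom C A D"
    and "A \<in> cObj C \<Longrightarrow> B \<in> cObj C \<Longrightarrow> D \<in> cObj C \<Longrightarrow> E \<in> cObj C \<Longrightarrow> f \<in> cHom C A B \<Longrightarrow> g \<in> cHom C B D \<Longrightarrow> h \<in> cHom C D E \<Longrightarrow>
        cComp C h (cComp C g f) = cComp C (cComp C h g) f"
    and "A \<in> cObj C \<Longrightarrow> B \<in> cObj C \<Longrightarrow> f \<in> cHom C A B \<Longrightarrow> cComp C f (cId C A) = f"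
    and "A \<in> cObj C \<Longrightarrow> B \<in> cObj C \<Longrightarrow> f \<in> cHom C A B \<Longrightarrow> cComp C (cId C B) f = f"
    and "A \<in> cObj C \<Longrightarrow> B \<in> cObj C \<Longrightarrow> D \<in> cObj C \<Longrightarrow> f \<in> cHom C A B \<Longrightarrow> f' \<in> cHom C A B \<Longrightarrow> g \<in> cHom C B D \<Longrightarrow>
         cComp C g (cAdd C A B f f') = cAdd C A D (cComp C g f) (cComp C g f')"
    and "A \<in> cObj C \<Longrightarrow> B \<in> cObj C \<Longrightarrow> D \<in> cObj C \<Longrightarrow> f \<in> cHom C A B \<Longrightarrow> g \<in> cHom C B D \<Longrightarrow> g' \<in> cHom C B D \<Longrightarrow>
         cComp C (cAdd C B D g g') f = cAdd C A D (cComp C g f) (cComp C g' f)"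
    and "A \<in> cObj C \<Longrightarrow> B \<in> cObj C \<Longrightarrow> cZero C A B \<in> cHom C A B"
    and "A \<in> cObj C \<Longrightarrow> B \<in> cObj C \<Longrightarrow> f \<in> cHom C A B \<Longrightarrow> g \<in> cHom C A B \<Longrightarrow> cAdd C A B f g \<in> cHom C A B"
proof -
  note c = cat_D[OF pre_D(1)[OF assms]]
  note p2 = pre_D(2)[OF assms] and p3 = pre_D(3)[OF assms] and p4 = pre_D(4)[OF assms]
  show "A \<in> cObj C \<Longrightarrow> cId C A \<in> cHom C A A" by (rule c(1)[rule_format])
  show "A \<in> cObj C \<Longrightarrow> B \<in> cObj C \<Longrightarrow> D \<in> cObj C \<Longrightarrow> f \<in> cHom C A B \<Longrightarrow> g \<in> cHom C B D \<Longrightarrow> cComp C g f \<in> cHom C A D"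
    by (rule c(2)[rule_format])
  show "A \<in> cObj C \<Longrightarrow> B \<in> cObj C \<Longrightarrow> D \<in> cObj C \<Longrightarrow> E \<in> cObj C \<Longrightarrow> f \<in> cHom C A B \<Longrightarrow> g \<in> cHom C B D \<Longrightarrow> h \<in> cHom C D E \<Longrightarrow>
        cComp C h (cComp C g f) = cComp C (cComp C h g) f" by (rule c(3)[rule_format])
  show "A \<in> cObj C \<Longrightarrow> B \<in> cObj C \<Longrightarrow> f \<in> cHom C A B \<Longrightarrow> cComp C f (cId C A) = f" using c(4)[rule_format] by simp
  show "A \<in> cObj C \<Longrightarrow> B \<in> cObj C \<Longrightarrow> f \<in> cHom C A B \<Longrightarrow> cComp C (cId C B) f = f" using c(4)[rule_format] by simp
  show "A \<in> cObj C \<Longrightarrow> B \<in> cObj C \<Longrightarrow> D \<in> cObj C \<Longrightarrow> f \<in> cHom C A B \<Longrightarrow> f' \<in> cHom C A B \<Longrightarrow> g \<in> cHom C B D \<Longrightarrow>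
         cComp C g (cAdd C A B f f') = cAdd C A D (cComp C g f) (cComp C g f')" by (rule p3[rule_format])
  show "A \<in> cObj C \<Longrightarrow> B \<in> cObj C \<Longrightarrow> D \<in> cObj C \<Longrightarrow> f \<in> cHom C A B \<Longrightarrow> g \<in> cHom C B D \<Longrightarrow> g' \<in> cHom C B D \<Longrightarrow>
         cComp C (cAdd C B D g g') f = cAdd C A D (cComp C g f) (cComp C g' f)" by (rule p4[rule_format])
  show "A \<in> cObj C \<Longrightarrow> B \<in> cObj C \<Longrightarrow> cZero C A B \<in> cHom C A B" by (rule pre_basic(1)[OF assms])
  show "A \<in> cObj C \<Longrightarrow> B \<in> cObj C \<Longrightarrow> f \<in> cHom C A B \<Longrightarrow> g \<in> cHom C A B \<Longrightarrow> cAdd C A B f g \<in> cHom C A B" by (rule pre_basic(2)[OF assms])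
qed

lemma comp_zero_left:
  assumes "preadditive C" "A \<in> cObj C" "B \<in> cObj C" "D \<in> cObj C" "g \<in> cHom C B D"
  shows "cComp C g (cZero C A B) = cZero C A D"
proof -
  interpret M: comm_group "HM C A D" by (rule HM_comm_group[OF assms(1,2,4)])
  let ?z = "cComp C g (cZero C A B)"
  have z: "?z \<in> cHom C A D" by (rule cat_facts(2)[OF assms(1,2,3,4) cat_facts(8)[OF assms(1,2,3)] assms(5)])
  have "cAdd C A B (cZero C A B) (cZero C A B) = cZero C A B"
    by (rule pre_basic(3)[OF assms(1,2,3) pre_basic(1)[OF assms(1,2,3)]])
  hence "?z = cComp C g (cAdd C A B (cZero C A B) (cZero C A B))" by simp
  also have "\<dots> = cAdd C A D ?z ?z"
    by (rule cat_facts(6)[OF assms(1,2,3,4) cat_facts(8)[OF assms(1,2,3)] cat_facts(8)[OF assms(1,2,3)] assms(5)])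
  finally have "?z = cAdd C A D ?z ?z" .
  hence "?z = \<one>\<^bsub>HM C A D\<^esub>" using z M.l_cancel_one'[of ?z ?z] by simp
  thus ?thesis by simp
qed

lemma comp_zero_right:
  assumes "preadditive C" "A \<in> cObj C" "B \<in> cObj C" "D \<in> cObj C" "f \<in> cHom C A B"
  shows "cComp C (cZero C B D) f = cZero C A D"
proof -
  interpret M: comm_group "HM C A D" by (rule HM_comm_group[OF assms(1,2,4)])
  let ?z = "cComp C (cZero C B D) f"
  have z: "?z \<in> cHom C A D" by (rule cat_facts(2)[OF assms(1,2,3,4) assms(5) cat_facts(8)[OF assms(1,3,4)]])
  have "cAdd C B D (cZero C B D) (cZero C B D) = cZero C B D"
    by (rule pre_basic(3)[OF assms(1,3,4) pre_basic(1)[OF assms(1,3,4)]])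
  hence "?z = cComp C (cAdd C B D (cZero C B D) (cZero C B D)) f" by simp
  also have "\<dots> = cAdd C A D ?z ?z"
    by (rule cat_facts(7)[OF assms(1,2,3,4) assms(5) cat_facts(8)[OF assms(1,3,4)] cat_facts(8)[OF assms(1,3,4)]])
  finally have "?z = cAdd C A D ?z ?z" .
  hence "?z = \<one>\<^bsub>HM C A D\<^esub>" using z M.l_cancel_one'[of ?z ?z] by simp
  thus ?thesis by simp
qed

lemma comp_finprod_left:
  assumes pre: "preadditive C" and ob: "A \<in> cObj C" "B \<in> cObj C" "D \<in> cObj C" and u: "u \<in> cHom C B D"
    and fin: "finite I" and f: "f \<in> I \<rightarrow> cHom C A B"
  shows "cComp C u (finprod (HM C A B) f I) = finprod (HM C A D) (\<lambda>i. cComp C u (f i)) I"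
proof -
  interpret M1: comm_monoid "HM C A B" by (rule HM_cm[OF pre ob(1,2)])
  interpret M2: comm_monoid "HM C A D" by (rule HM_cm[OF pre ob(1,3)])
  show ?thesis using fin f
  proof (induct I rule: finite_induct)
    case empty
    have "cComp C u (finprod (HM C A B) f {}) = cComp C u (cZero C A B)"
      using M1.finprod_empty by simp
    also have "\<dots> = cZero C A D" by (rule comp_zero_left[OF pre ob u])
    also have "\<dots> = finprod (HM C A D) (\<lambda>i. cComp C u (f i)) {}"
      using M2.finprod_empty by simp
    finally show ?case .
  next
    case (insert a I)
    have fa: "f a \<in> cHom C A B" and fI: "f \<in> I \<rightarrow> cHom C A B" using insert by auto
    have cl: "finprod (HM C A B) f I \<in> cHom C A B" using M1.finprod_closed[of f I] fI by simp
    have "cComp C u (finprod (HM C A B) f (insert a I)) = cComp C u (cAdd C A B (f a) (finprod (HM C A B) f I))"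
      using M1.finprod_insert[of I a f] insert fa fI by simp
    also have "\<dots> = cAdd C A D (cComp C u (f a)) (cComp C u (finprod (HM C A B) f I))"
      by (rule cat_facts(6)[OF pre ob fa cl u])
    also have "\<dots> = finprod (HM C A D) (\<lambda>i. cComp C u (f i)) (insert a I)"
    proof -
      have fc: "(\<lambda>i. cComp C u (f i)) \<in> I \<rightarrow> carrier (HM C A D)"
        using fI cat_facts(2)[OF pre ob _ u] by auto
      have fa2: "cComp C u (f a) \<in> carrier (HM C A D)" using cat_facts(2)[OF pre ob fa u] by simp
      show ?thesis using M2.finprod_insert[OF insert(1,2) fc fa2] insert fI by simp
    qed
    finally show ?case .
  qed
qed

lemma comp_finprod_right:
  assumes pre: "preadditive C" and ob: "A \<in> cObj C" "B \<in> cObj C" "D \<in> cObj C" and v: "v \<in> cHom C A B"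
    and fin: "finite I" and f: "f \<in> I \<rightarrow> cHom C B D"
  shows "cComp C (finprod (HM C B D) f I) v = finprod (HM C A D) (\<lambda>i. cComp C (f i) v) I"
proof -
  interpret M1: comm_monoid "HM C B D" by (rule HM_cm[OF pre ob(2,3)])
  interpret M2: comm_monoid "HM C A D" by (rule HM_cm[OF pre ob(1,3)])
  show ?thesis using fin f
  proof (induct I rule: finite_induct)
    case empty
    have "cComp C (finprod (HM C B D) f {}) v = cComp C (cZero C B D) v"
      using M1.finprod_empty by simp
    also have "\<dots> = cZero C A D" by (rule comp_zero_right[OF pre ob v])
    also have "\<dots> = finprod (HM C A D) (\<lambda>i. cComp C (f i) v) {}"
      using M2.finprod_empty by simp
    finally show ?case .
  next
    case (insert a I)
    have fa: "f a \<in> cHom C B D" and fI: "f \<in> I \<rightarrow> cHom C B D" using insert by auto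
    have cl: "finprod (HM C B D) f I \<in> cHom C B D" using M1.finprod_closed[of f I] fI by simp
    have "cComp C (finprod (HM C B D) f (insert a I)) v = cComp C (cAdd C B D (f a) (finprod (HM C B D) f I)) v"
      using M1.finprod_insert[of I a f] insert fa fI by simp
    also have "\<dots> = cAdd C A D (cComp C (f a) v) (cComp C (finprod (HM C B D) f I) v)"
      by (rule cat_facts(7)[OF pre ob v fa cl])
    also have "\<dots> = finprod (HM C A D) (\<lambda>i. cComp C (f i) v) (insert a I)"
    proof -
      have fc: "(\<lambda>i. cComp C (f i) v) \<in> I \<rightarrow> carrier (HM C A D)"
        using fI cat_facts(2)[OF pre ob v] by auto
      have fa2: "cComp C (f a) v \<in> carrier (HM C A D)" using cat_facts(2)[OF pre ob v fa] by simp
      show ?thesis using M2.finprod_insert[OF insert(1,2) fc fa2] insert fI by simp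
    qed
    finally show ?case .
  qed
qed

lemma nsmul_finprod:
  assumes "preadditive C" "A \<in> cObj C" "B \<in> cObj C" "f \<in> cHom C A B"
  shows "nsmul C A B n f = finprod (HM C A B) (\<lambda>_. f) {..<n}"
proof -
  interpret M: comm_monoid "HM C A B" by (rule HM_cm[OF assms(1,2,3)])
  have "nsmul C A B n f = f [^]\<^bsub>HM C A B\<^esub> n"
  proof (induct n)
    case 0 then show ?case by (simp add: nsmul_def)
  next
    case (Suc n)
    have "nsmul C A B (Suc n) f = cAdd C A B f (nsmul C A B n f)" by (simp add: nsmul_def)
    also have "\<dots> = f [^]\<^bsub>HM C A B\<^esub> n \<otimes>\<^bsub>HM C A B\<^esub> f"
      using Suc M.m_comm[of f "f [^]\<^bsub>HM C A B\<^esub> n"] assms(4) M.nat_pow_closed[of f n] by simp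
    finally show ?case by simp
  qed
  thus ?thesis using M.finprod_const[of f "{..<n}"] assms(4) by simp
qed

lemma nsmul_closed:
  assumes "preadditive C" "A \<in> cObj C" "B \<in> cObj C" "f \<in> cHom C A B"
  shows "nsmul C A B n f \<in> cHom C A B"
  using nsmul_finprod[OF assms] comm_monoid.finprod_closed[OF HM_cm[OF assms(1-3)], of "\<lambda>_. f" "{..<n}"] assms(4) by simp

lemma comp_nsmul_left:
  assumes pre: "preadditive C" and ob: "A \<in> cObj C" "B \<in> cObj C" "D \<in> cObj C" and u: "u \<in> cHom C B D"
    and f: "f \<in> cHom C A B"
  shows "cComp C u (nsmul C A B n f) = nsmul C A D n (cComp C u f)"
  using nsmul_finprod[OF pre ob(1,2) f] nsmul_finprod[OF pre ob(1,3) cat_facts(2)[OF pre ob f u]]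
    comp_finprod_left[OF pre ob u, of "{..<n}" "\<lambda>_. f"] f by simp

lemma comp_nsmul_right:
  assumes pre: "preadditive C" and ob: "A \<in> cObj C" "B \<in> cObj C" "D \<in> cObj C" and v: "v \<in> cHom C A B"
    and f: "f \<in> cHom C B D"
  shows "cComp C (nsmul C B D n f) v = nsmul C A D n (cComp C f v)"
  using nsmul_finprod[OF pre ob(2,3) f] nsmul_finprod[OF pre ob(1,3) cat_facts(2)[OF pre ob v f]]
    comp_finprod_right[OF pre ob v, of "{..<n}" "\<lambda>_. f"] f by simp

definition rc :: "('g,'b) monoid_scheme \<Rightarrow> 'g set \<Rightarrow> 'g set \<Rightarrow> 'g set set" where
  "rc G L K = (\<lambda>k. L #>\<^bsub>G\<^esub> k) ` K"
definition rep :: "'g set \<Rightarrow> 'g" where "rep c = (SOME x. x \<in> c)"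
definition TS :: "('c,'d) monoid_scheme \<Rightarrow> ('g,'b) monoid_scheme \<Rightarrow> 'g set \<Rightarrow> 'g set \<Rightarrow> ('g \<Rightarrow> 'c) \<Rightarrow> 'c" where
  "TS M G L K F = finprod M (\<lambda>c. F (rep c)) (rc G L K)"
definition DCo :: "('g,'b) monoid_scheme \<Rightarrow> 'g set \<Rightarrow> 'g \<Rightarrow> 'g set" where
  "DCo G H x = {h1 \<otimes>\<^bsub>G\<^esub> x \<otimes>\<^bsub>G\<^esub> h2 | h1 h2. h1 \<in> H \<and> h2 \<in> H}"
definition Lg :: "('g,'b) monoid_scheme \<Rightarrow> 'g set \<Rightarrow> 'g \<Rightarrow> 'g set" where
  "Lg G H g = H \<inter> conj_sub G g H"

context group
begin

lemma cancel_l [simp]: "x \<in> carrier G \<Longrightarrow> y \<in> carrier G \<Longrightarrow> inv x \<otimes> (x \<otimes> y) = y"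
  by (simp add: m_assoc[symmetric])
lemma cancel_l2 [simp]: "x \<in> carrier G \<Longrightarrow> y \<in> carrier G \<Longrightarrow> x \<otimes> (inv x \<otimes> y) = y"
  by (simp add: m_assoc[symmetric])

lemma conj_sub_mem:
  assumes "subgroup H G" "g \<in> carrier G"
  shows "x \<in> conj_sub G g H \<longleftrightarrow> x \<in> carrier G \<and> g \<otimes> x \<otimes> inv g \<in> H"
proof
  assume "x \<in> conj_sub G g H"
  then obtain h where h: "h \<in> H" "x = inv g \<otimes> h \<otimes> g" unfolding conj_sub_def by blast
  have hc: "h \<in> carrier G" by (rule subgroup.mem_carrier[OF assms(1) h(1)])
  have "g \<otimes> x \<otimes> inv g = h" using h hc assms(2) by (simp add: m_assoc)
  then show "x \<in> carrier G \<and> g \<otimes> x \<otimes> inv g \<in> H" using h hc assms(2) by simp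
next
  assume a: "x \<in> carrier G \<and> g \<otimes> x \<otimes> inv g \<in> H"
  have "inv g \<otimes> (g \<otimes> x \<otimes> inv g) \<otimes> g = x" using a assms(2)
    by (simp add: m_assoc)
  hence "x = inv g \<otimes> (g \<otimes> x \<otimes> inv g) \<otimes> g" by simp
  then show "x \<in> conj_sub G g H" unfolding conj_sub_def using a by blast
qed

lemma conj_sub_subgroup:
  assumes "subgroup H G" "g \<in> carrier G"
  shows "subgroup (conj_sub G g H) G"
proof (rule subgroupI)
  show "conj_sub G g H \<subseteq> carrier G" using conj_sub_mem[OF assms] by blast
  have "\<one> \<in> conj_sub G g H" using conj_sub_mem[OF assms, of \<one>] assms(2) subgroup.one_closed[OF assms(1)] by simp
  then show "conj_sub G g H \<noteq> {}" by blast
next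
  fix a assume a: "a \<in> conj_sub G g H"
  hence ac: "a \<in> carrier G" "g \<otimes> a \<otimes> inv g \<in> H" using conj_sub_mem[OF assms] by auto
  have "g \<otimes> inv a \<otimes> inv g = inv (g \<otimes> a \<otimes> inv g)" using ac assms(2) by (simp add: inv_mult_group m_assoc)
  hence "g \<otimes> inv a \<otimes> inv g \<in> H" using subgroup.m_inv_closed[OF assms(1) ac(2)] by simp
  thus "inv a \<in> conj_sub G g H" using conj_sub_mem[OF assms] ac by simp
next
  fix a b assume a: "a \<in> conj_sub G g H" and b: "b \<in> conj_sub G g H"
  hence ac: "a \<in> carrier G" "g \<otimes> a \<otimes> inv g \<in> H" "b \<in> carrier G" "g \<otimes> b \<otimes> inv g \<in> H"
    using conj_sub_mem[OF assms] by auto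
  have "g \<otimes> (a \<otimes> b) \<otimes> inv g = (g \<otimes> a \<otimes> inv g) \<otimes> (g \<otimes> b \<otimes> inv g)"
    using ac assms(2) by (simp add: m_assoc)
  hence "g \<otimes> (a \<otimes> b) \<otimes> inv g \<in> H" using subgroup.m_closed[OF assms(1) ac(2) ac(4)] by simp
  thus "a \<otimes> b \<in> conj_sub G g H" using conj_sub_mem[OF assms] ac by simp
qed

lemma Lg_subgroup: "subgroup H G \<Longrightarrow> g \<in> carrier G \<Longrightarrow> subgroup (Lg G H g) G"
  unfolding Lg_def by (rule subgroups_Inter_pair[OF _ conj_sub_subgroup])

lemma Lg_mem:
  assumes "subgroup H G" "g \<in> carrier G"
  shows "x \<in> Lg G H g \<longleftrightarrow> x \<in> H \<and> g \<otimes> x \<otimes> inv g \<in> H"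
  unfolding Lg_def using conj_sub_mem[OF assms, of x] subgroup.mem_carrier[OF assms(1), of x] by auto

lemma rep_rcos:
  assumes "subgroup L G" "k \<in> carrier G"
  shows "rep (L #> k) \<in> L #> k"
  unfolding rep_def by (rule someI) (rule rcos_self[OF assms(2,1)])

lemma rep_rcos_ex:
  assumes "subgroup L G" "k \<in> carrier G"
  shows "\<exists>l\<in>L. rep (L #> k) = l \<otimes> k"
  using rep_rcos[OF assms] unfolding r_coset_def by blast

lemma rc_sub: "subgroup L G \<Longrightarrow> subgroup K G \<Longrightarrow> L \<subseteq> K \<Longrightarrow> c \<in> rc G L K \<Longrightarrow> c \<subseteq> K"
  unfolding rc_def r_coset_def using subgroup.m_closed[of K G] by blast

lemma rep_in:
  assumes "subgroup L G" "subgroup K G" "L \<subseteq> K" "c \<in> rc G L K"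
  shows "rep c \<in> c" "rep c \<in> K" "c = L #> rep c"
proof -
  obtain k where k: "k \<in> K" "c = L #> k" using assms(4) unfolding rc_def by blast
  have kc: "k \<in> carrier G" by (rule subgroup.mem_carrier[OF assms(2) k(1)])
  show 1: "rep c \<in> c" using rep_rcos[OF assms(1) kc] k by simp
  show "rep c \<in> K" using 1 rc_sub[OF assms] by blast
  show "c = L #> rep c" using repr_independence[of "rep c" L k] 1 k kc assms(1) by simp
qed

lemma eval_rep:
  assumes "subgroup L G" "subgroup K G" "L \<subseteq> K" "k \<in> K"
    and inv: "\<And>l x. l \<in> L \<Longrightarrow> x \<in> K \<Longrightarrow> F (l \<otimes> x) = F x"
  shows "F (rep (L #> k)) = F k"
proof -
  have kc: "k \<in> carrier G" by (rule subgroup.mem_carrier[OF assms(2,4)])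
  obtain l where "l \<in> L" "rep (L #> k) = l \<otimes> k" using rep_rcos_ex[OF assms(1) kc] by blast
  thus ?thesis using inv assms(4) by simp
qed

lemma finite_rc: "finite (carrier G) \<Longrightarrow> subgroup K G \<Longrightarrow> finite (rc G L K)"
  unfolding rc_def by (rule finite_imageI[OF finite_subset[OF subgroup.subset]])

lemma TS_rtrans:
  assumes M: "comm_monoid M" and sg: "subgroup L G" "subgroup K G" "L \<subseteq> K"
    and fin: "finite (carrier G)"
    and F: "F \<in> K \<rightarrow> carrier M" and inv: "\<And>l x. l \<in> L \<Longrightarrow> x \<in> K \<Longrightarrow> F (l \<otimes> x) = F x"
    and y: "y \<in> K"
  shows "TS M G L K (\<lambda>x. F (x \<otimes> y)) = TS M G L K F"
proof -
  interpret M: comm_monoid M by (rule M)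
  have yc: "y \<in> carrier G" by (rule subgroup.mem_carrier[OF sg(2) y])
  have Lc: "L \<subseteq> carrier G" by (rule subgroup.subset[OF sg(1)])
  let ?phi = "\<lambda>c. c #> y"
  have img: "?phi ` rc G L K = rc G L K"
  proof
    show "?phi ` rc G L K \<subseteq> rc G L K"
    proof
      fix d assume "d \<in> ?phi ` rc G L K"
      then obtain k where k: "k \<in> K" "d = (L #> k) #> y" unfolding rc_def by blast
      have "d = L #> (k \<otimes> y)" using k coset_mult_assoc[OF Lc subgroup.mem_carrier[OF sg(2) k(1)] yc] by simp
      moreover have "k \<otimes> y \<in> K" by (rule subgroup.m_closed[OF sg(2) k(1) y])
      ultimately show "d \<in> rc G L K" unfolding rc_def by blast
    qed
  next
    show "rc G L K \<subseteq> ?phi ` rc G L K"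
    proof
      fix d assume "d \<in> rc G L K"
      then obtain k where k: "k \<in> K" "d = L #> k" unfolding rc_def by blast
      have kc: "k \<in> carrier G" by (rule subgroup.mem_carrier[OF sg(2) k(1)])
      have "k \<otimes> inv y \<in> K" by (rule subgroup.m_closed[OF sg(2) k(1) subgroup.m_inv_closed[OF sg(2) y]])
      moreover have "d = (L #> (k \<otimes> inv y)) #> y"
        using k coset_mult_assoc[OF Lc] kc yc by (simp add: m_assoc)
      ultimately show "d \<in> ?phi ` rc G L K" unfolding rc_def by blast
    qed
  qed
  have inj: "inj_on ?phi (rc G L K)"
  proof (rule inj_onI)
    fix c d assume c: "c \<in> rc G L K" and d: "d \<in> rc G L K" and e: "c #> y = d #> y"
    have cc: "c \<subseteq> carrier G" "d \<subseteq> carrier G" using rc_sub[OF sg c] rc_sub[OF sg d] subgroup.subset[OF sg(2)] by auto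
    have "(c #> y) #> inv y = (d #> y) #> inv y" using e by simp
    thus "c = d" using coset_mult_assoc cc yc by (simp add: coset_mult_assoc)
  qed
  have Fr: "\<And>c. c \<in> rc G L K \<Longrightarrow> F (rep c) \<in> carrier M" using rep_in(2)[OF sg] F by auto
  have "TS M G L K F = finprod M (\<lambda>c. F (rep c)) (?phi ` rc G L K)" unfolding TS_def using img by simp
  also have "\<dots> = finprod M (\<lambda>c. F (rep (c #> y))) (rc G L K)"
    by (rule M.finprod_reindex) (use img Fr inj in auto)
  also have "\<dots> = finprod M (\<lambda>c. F (rep c \<otimes> y)) (rc G L K)"
  proof (rule M.finprod_cong')
    show "(\<lambda>c. F (rep c \<otimes> y)) \<in> rc G L K \<rightarrow> carrier M"
      using rep_in(2)[OF sg] subgroup.m_closed[OF sg(2) _ y] F by auto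
  next
    fix c assume c: "c \<in> rc G L K"
    obtain k where k: "k \<in> K" "c = L #> k" using c unfolding rc_def by blast
    have kc: "k \<in> carrier G" by (rule subgroup.mem_carrier[OF sg(2) k(1)])
    have ky: "k \<otimes> y \<in> K" by (rule subgroup.m_closed[OF sg(2) k(1) y])
    have "c #> y = L #> (k \<otimes> y)" using k coset_mult_assoc[OF Lc kc yc] by simp
    hence 1: "F (rep (c #> y)) = F (k \<otimes> y)" using eval_rep[OF sg ky inv] by simp
    obtain l where l: "l \<in> L" "rep c = l \<otimes> k" using rep_rcos_ex[OF sg(1) kc] k by blast
    have lc: "l \<in> carrier G" using l Lc by blast
    have "F (rep c \<otimes> y) = F (l \<otimes> (k \<otimes> y))" using l lc kc yc by (simp add: m_assoc)
    also have "\<dots> = F (k \<otimes> y)" by (rule inv[OF l(1) ky])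
    finally show "F (rep (c #> y)) = F (rep c \<otimes> y)" using 1 by simp
  qed simp
  finally show ?thesis unfolding TS_def by simp
qed

end

context group
begin

lemma DCo_mem: "z \<in> DCo G H x \<longleftrightarrow> (\<exists>h1\<in>H. \<exists>h2\<in>H. z = h1 \<otimes> x \<otimes> h2)"
  unfolding DCo_def by blast

lemma DCo_self: "subgroup H G \<Longrightarrow> x \<in> carrier G \<Longrightarrow> x \<in> DCo G H x"
  unfolding DCo_mem using subgroup.one_closed[of H G] by (metis l_one r_one m_closed one_closed)

lemma DCo_carrier: assumes "subgroup H G" "x \<in> carrier G" shows "DCo G H x \<subseteq> carrier G"
proof
  fix z assume "z \<in> DCo G H x"
  then obtain h1 h2 where h: "h1 \<in> H" "h2 \<in> H" "z = h1 \<otimes> x \<otimes> h2" unfolding DCo_mem by blast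
  show "z \<in> carrier G" using h subgroup.mem_carrier[OF assms(1)] assms(2) by simp
qed

lemma DCo_sub:
  assumes H: "subgroup H G" and x: "x \<in> carrier G" and y: "y \<in> DCo G H x"
  shows "DCo G H y \<subseteq> DCo G H x"
proof
  obtain a b where ab: "a \<in> H" "b \<in> H" "y = a \<otimes> x \<otimes> b" using y unfolding DCo_mem by blast
  fix z assume "z \<in> DCo G H y"
  then obtain c d where cd: "c \<in> H" "d \<in> H" "z = c \<otimes> y \<otimes> d" unfolding DCo_mem by blast
  have car: "a \<in> carrier G" "b \<in> carrier G" "c \<in> carrier G" "d \<in> carrier G"
    using ab cd subgroup.mem_carrier[OF H] by auto
  have "z = (c \<otimes> a) \<otimes> x \<otimes> (b \<otimes> d)" using cd ab car x by (simp add: m_assoc)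
  moreover have "c \<otimes> a \<in> H" "b \<otimes> d \<in> H" using subgroup.m_closed[OF H] ab cd by auto
  ultimately show "z \<in> DCo G H x" unfolding DCo_mem by blast
qed

lemma DCo_symm:
  assumes H: "subgroup H G" and x: "x \<in> carrier G" and y: "y \<in> DCo G H x"
  shows "x \<in> DCo G H y"
proof -
  obtain a b where ab: "a \<in> H" "b \<in> H" "y = a \<otimes> x \<otimes> b" using y unfolding DCo_mem by blast
  have car: "a \<in> carrier G" "b \<in> carrier G"
    using ab subgroup.mem_carrier[OF H] by auto
  have "x = inv a \<otimes> y \<otimes> inv b" using ab car x by (simp add: m_assoc)
  moreover have "inv a \<in> H" "inv b \<in> H" using subgroup.m_inv_closed[OF H] ab by auto
  ultimately show ?thesis unfolding DCo_mem by blast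
qed

lemma DCo_eq:
  assumes H: "subgroup H G" and x: "x \<in> carrier G" and y: "y \<in> DCo G H x"
  shows "DCo G H y = DCo G H x"
proof
  show "DCo G H y \<subseteq> DCo G H x" by (rule DCo_sub[OF H x y])
  have yc: "y \<in> carrier G" using DCo_carrier[OF H x] y by blast
  show "DCo G H x \<subseteq> DCo G H y" by (rule DCo_sub[OF H yc DCo_symm[OF H x y]])
qed

lemma core_identity:
  assumes M: "comm_monoid M" and fin: "finite (carrier G)" and H: "subgroup H G"
    and F: "F \<in> carrier G \<rightarrow> carrier M"
    and inv: "\<And>h x. h \<in> H \<Longrightarrow> x \<in> carrier G \<Longrightarrow> F (h \<otimes> x) = F x"
  shows "finprod M (\<lambda>Dc. TS M G (Lg G H (rep Dc)) H (\<lambda>h. F (rep Dc \<otimes> h))) (DCo G H ` carrier G)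
         = TS M G H (carrier G) F"
proof -
  interpret M: comm_monoid M by (rule M)
  have Gsub: "subgroup (carrier G) G" by (rule subgroup_self)
  have Hc: "H \<subseteq> carrier G" by (rule subgroup.subset[OF H])
  let ?DC = "DCo G H ` carrier G"
  let ?R = "rc G H (carrier G)"
  define S where "S Dc = {c \<in> ?R. c \<subseteq> Dc}" for Dc
  have repO: "rep Dc \<in> Dc" "rep Dc \<in> carrier G" "Dc = DCo G H (rep Dc)" if "Dc \<in> ?DC" for Dc
  proof -
    from that obtain x where x1: "Dc = DCo G H x" and x2: "x \<in> carrier G" by (rule imageE)
    note x = x2 x1
    show 1: "rep Dc \<in> Dc" unfolding rep_def by (rule someI[of _ x]) (use DCo_self[OF H x(1)] x in simp)
    show "rep Dc \<in> carrier G" using 1 DCo_carrier[OF H x(1)] x by blast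
    show "Dc = DCo G H (rep Dc)" using DCo_eq[OF H x(1)] 1 x by simp
  qed
  have Rc: "c \<subseteq> carrier G" if "c \<in> ?R" for c using rc_sub[OF H Gsub Hc that] .
  have union: "?R = \<Union> (S ` ?DC)"
  proof
    show "?R \<subseteq> \<Union> (S ` ?DC)"
    proof
      fix c assume c: "c \<in> ?R"
      then obtain k where k: "k \<in> carrier G" "c = H #> k" unfolding rc_def by blast
      have "c \<subseteq> DCo G H k"
      proof
        fix z assume "z \<in> c"
        then obtain h where h: "h \<in> H" "z = h \<otimes> k" using k unfolding r_coset_def by blast
        have "z = h \<otimes> k \<otimes> \<one>" using h k Hc by auto
        thus "z \<in> DCo G H k" unfolding DCo_mem using h subgroup.one_closed[OF H] by blast
      qed
      thus "c \<in> \<Union> (S ` ?DC)" unfolding S_def using c k by blast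
    qed
  qed (auto simp: S_def)
  have disj: "pairwise (\<lambda>Dc1 Dc2. disjnt (S Dc1) (S Dc2)) ?DC"
  proof (rule pairwiseI)
    fix Dc1 Dc2 assume o: "Dc1 \<in> ?DC" "Dc2 \<in> ?DC" "Dc1 \<noteq> Dc2"
    show "disjnt (S Dc1) (S Dc2)"
    proof (rule ccontr)
      assume "\<not> disjnt (S Dc1) (S Dc2)"
      then obtain c where c: "c \<in> S Dc1" "c \<in> S Dc2" unfolding disjnt_def by blast
      have cR: "c \<in> ?R" using c unfolding S_def by blast
      have "rep c \<in> c" using rep_in(1)[OF H Gsub Hc cR] .
      hence r: "rep c \<in> Dc1" "rep c \<in> Dc2" using c unfolding S_def by blast+
      have "DCo G H (rep c) = Dc1" using DCo_eq[OF H repO(2)[OF o(1)]] r(1) repO(3)[OF o(1)] by simp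
      moreover have "DCo G H (rep c) = Dc2" using DCo_eq[OF H repO(2)[OF o(2)]] r(2) repO(3)[OF o(2)] by simp
      ultimately show False using o(3) by simp
    qed
  qed
  have finDC: "finite ?DC" using fin by simp
  have finS: "finite (S Dc)" for Dc
    using finite_rc[OF fin Gsub, of H] unfolding S_def by simp
  have Fval: "F (rep c) \<in> carrier M" if "c \<in> ?R" for c
    using F rep_in(2)[OF H Gsub Hc that] by blast
  have "TS M G H (carrier G) F = finprod M (\<lambda>c. F (rep c)) (\<Union> (S ` ?DC))"
    unfolding TS_def using union by simp
  also have "\<dots> = finprod M (\<lambda>Dc. finprod M (\<lambda>c. F (rep c)) (S Dc)) ?DC"
    by (rule M.finprod_UN_disjoint[OF finDC finS disj]) (use Fval in \<open>auto simp: S_def\<close>)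
  also have "\<dots> = finprod M (\<lambda>Dc. TS M G (Lg G H (rep Dc)) H (\<lambda>h. F (rep Dc \<otimes> h))) ?DC"
  proof (rule M.finprod_cong')
    show "(\<lambda>Dc. TS M G (Lg G H (rep Dc)) H (\<lambda>h. F (rep Dc \<otimes> h))) \<in> ?DC \<rightarrow> carrier M"
    proof
      fix Dc assume Dc: "Dc \<in> ?DC"
      have L: "subgroup (Lg G H (rep Dc)) G" by (rule Lg_subgroup[OF H repO(2)[OF Dc]])
      have LH: "Lg G H (rep Dc) \<subseteq> H" unfolding Lg_def by blast
      show "TS M G (Lg G H (rep Dc)) H (\<lambda>h. F (rep Dc \<otimes> h)) \<in> carrier M"
        unfolding TS_def
        by (rule M.finprod_closed)
           (use rep_in(2)[OF L H LH] F repO(2)[OF Dc] subgroup.mem_carrier[OF H] in auto)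
    qed
  next
    fix Dc assume Dc: "Dc \<in> ?DC"
    define g where "g = rep Dc"
    have gc: "g \<in> carrier G" using repO(2)[OF Dc] g_def by simp
    have Og: "Dc = DCo G H g" using repO(3)[OF Dc] g_def by simp
    define L where "L = Lg G H g"
    have L: "subgroup L G" unfolding L_def by (rule Lg_subgroup[OF H gc])
    have LH: "L \<subseteq> H" unfolding L_def Lg_def by blast
    have Lmem: "x \<in> L \<longleftrightarrow> x \<in> H \<and> g \<otimes> x \<otimes> inv g \<in> H" for x
      unfolding L_def by (rule Lg_mem[OF H gc])
    have Hcar: "x \<in> H \<Longrightarrow> x \<in> carrier G" for x using Hc by blast
    define psi where "psi c' = H #> (g \<otimes> rep c')" for c'
    have repH: "rep c' \<in> H" if "c' \<in> rc G L H" for c' using rep_in(2)[OF L H LH that] .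
    have inj: "inj_on psi (rc G L H)"
    proof (rule inj_onI)
      fix c1 c2 assume c1: "c1 \<in> rc G L H" and c2: "c2 \<in> rc G L H" and e: "psi c1 = psi c2"
      define a where "a = rep c1"
      define b where "b = rep c2"
      have aH: "a \<in> H" and bH: "b \<in> H" using repH c1 c2 a_def b_def by auto
      have ac: "a \<in> carrier G" and bc: "b \<in> carrier G" using aH bH Hcar by auto
      have "g \<otimes> a \<in> H #> (g \<otimes> b)"
        using e rcos_self[of "g \<otimes> a" H] gc ac H unfolding psi_def a_def b_def by simp
      hence "(g \<otimes> a) \<otimes> inv (g \<otimes> b) \<in> H"
        using subgroup.rcos_module_imp[OF H is_group] gc bc by simp
      moreover have "(g \<otimes> a) \<otimes> inv (g \<otimes> b) = g \<otimes> (a \<otimes> inv b) \<otimes> inv g"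
        using gc ac bc by (simp add: inv_mult_group m_assoc)
      ultimately have "a \<otimes> inv b \<in> L"
        using Lmem subgroup.m_closed[OF H aH subgroup.m_inv_closed[OF H bH]] by simp
      hence "a \<in> L #> b" using subgroup.rcos_module_rev[OF L is_group bc ac] by simp
      hence "L #> b = L #> a" using repr_independence[OF _ bc L] by simp
      moreover have "c1 = L #> a" "c2 = L #> b" using rep_in(3)[OF L H LH] c1 c2 a_def b_def by auto
      ultimately show "c1 = c2" by simp
    qed
    have img: "psi ` rc G L H = S Dc"
    proof
      show "psi ` rc G L H \<subseteq> S Dc"
      proof
        fix d assume "d \<in> psi ` rc G L H"
        then obtain c' where c'1: "d = psi c'" and c'2: "c' \<in> rc G L H" by (rule imageE)
        note c' = c'2 c'1
        have aH: "rep c' \<in> H" using repH c' by simp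
        have ac: "rep c' \<in> carrier G" using Hcar aH .
        have "d \<in> ?R" unfolding rc_def psi_def c' using gc ac by simp
        moreover have "d \<subseteq> Dc"
        proof
          fix z assume "z \<in> d"
          then obtain h where h: "h \<in> H" "z = h \<otimes> (g \<otimes> rep c')" unfolding c' psi_def r_coset_def by blast
          have "z = h \<otimes> g \<otimes> rep c'" using h gc ac Hcar by (simp add: m_assoc)
          thus "z \<in> Dc" unfolding Og DCo_mem using h aH by blast
        qed
        ultimately show "d \<in> S Dc" unfolding S_def by blast
      qed
    next
      show "S Dc \<subseteq> psi ` rc G L H"
      proof
        fix c assume c: "c \<in> S Dc"
        hence cR: "c \<in> ?R" and cO: "c \<subseteq> Dc" unfolding S_def by auto
        then obtain k where k: "k \<in> carrier G" "c = H #> k" unfolding rc_def by blast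
        have "k \<in> Dc" using rcos_self[OF k(1) H] k cO by blast
        then obtain h1 h2 where h: "h1 \<in> H" "h2 \<in> H" "k = h1 \<otimes> g \<otimes> h2" unfolding Og DCo_mem by blast
        have h2c: "h2 \<in> carrier G" and h1c: "h1 \<in> carrier G" using h Hcar by auto
        define c' where "c' = L #> h2"
        have c'R: "c' \<in> rc G L H" unfolding c'_def rc_def using h(2) by blast
        obtain l where l: "l \<in> L" "rep c' = l \<otimes> h2" using rep_rcos_ex[OF L h2c] c'_def by blast
        have lH: "l \<in> H" and lc: "l \<in> carrier G" using l LH Hcar by auto
        have "inv l \<in> L" using subgroup.m_inv_closed[OF L l(1)] .
        hence gil: "g \<otimes> inv l \<otimes> inv g \<in> H" using Lmem by simp
        have "k \<otimes> inv (g \<otimes> rep c') = h1 \<otimes> (g \<otimes> inv l \<otimes> inv g)"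
          using h l gc h1c h2c lc by (simp add: inv_mult_group m_assoc)
        hence "k \<otimes> inv (g \<otimes> rep c') \<in> H" using subgroup.m_closed[OF H h(1) gil] by simp
        hence "k \<in> H #> (g \<otimes> rep c')"
          using subgroup.rcos_module_rev[OF H is_group _ k(1)] gc l lc h2c by simp
        hence "H #> (g \<otimes> rep c') = H #> k" using repr_independence[OF _ _ H] gc l lc h2c by simp
        hence "psi c' = c" unfolding psi_def using k by simp
        thus "c \<in> psi ` rc G L H" using c'R by blast
      qed
    qed
    have "finprod M (\<lambda>c. F (rep c)) (S Dc) = finprod M (\<lambda>c. F (rep c)) (psi ` rc G L H)"
      using img by simp
    also have "\<dots> = finprod M (\<lambda>c'. F (rep (psi c'))) (rc G L H)"
      by (rule M.finprod_reindex) (use img Fval inj in \<open>auto simp: S_def\<close>)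
    also have "\<dots> = finprod M (\<lambda>c'. F (g \<otimes> rep c')) (rc G L H)"
    proof (rule M.finprod_cong')
      show "(\<lambda>c'. F (g \<otimes> rep c')) \<in> rc G L H \<rightarrow> carrier M"
        using repH Hcar gc F by auto
    next
      fix c' assume c': "c' \<in> rc G L H"
      have gr: "g \<otimes> rep c' \<in> carrier G" using repH[OF c'] Hcar gc by simp
      show "F (rep (psi c')) = F (g \<otimes> rep c')" unfolding psi_def
        by (rule eval_rep[OF H Gsub Hc gr]) (rule inv)
    qed simp
    finally show "finprod M (\<lambda>c. F (rep c)) (S Dc) = TS M G (Lg G H (rep Dc)) H (\<lambda>h. F (rep Dc \<otimes> h))"
      unfolding TS_def L_def g_def by simp
  qed simp
  finally show ?thesis by simp
qed

end

lemma nsmul_pow: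
  assumes "preadditive C" "A \<in> cObj C" "B \<in> cObj C" "f \<in> cHom C A B"
  shows "nsmul C A B n f = f [^]\<^bsub>HM C A B\<^esub> n"
  using nsmul_finprod[OF assms] comm_monoid.finprod_const[OF HM_cm[OF assms(1-3)], of f "{..<n}"] assms(4) by simp

locale MT =
  fixes C :: "('o, 'm) addcat" and G :: "('g, 'b) monoid_scheme" (structure)
    and X :: 'o and act :: "'g \<Rightarrow> 'm" and H :: "'g set"
    and Q :: "'g set \<Rightarrow> 'o" and p :: "'g set \<Rightarrow> 'm"
    and P :: 'o and \<iota> :: "'g \<Rightarrow> 'm" and d0 d1 :: 'm
  assumes add: "additive_category C"
    and grp: "group G" and fin: "finite (carrier G)"
    and ga: "group_action_obj C G X act"
    and sH: "subgroup H G"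
    and ninv: "invertible_in_homs C (card (carrier G) div card H)"
    and quo: "\<forall>L. subgroup L G \<longrightarrow> is_cat_quotient C X act L (Q L) (p L)"
    and cop: "is_coproduct C (carrier G) (\<lambda>g. Q (H \<inter> conj_sub G g H)) P \<iota>"
    and d0: "d0 \<in> cHom C P (Q H)" and d1: "d1 \<in> cHom C P (Q H)"
    and d0i: "\<forall>g\<in>carrier G. cComp C d0 (\<iota> g) = qmap C act Q p (H \<inter> conj_sub G g H) H \<one>\<^bsub>G\<^esub>"
    and d1i: "\<forall>g\<in>carrier G. cComp C d1 (\<iota> g) = qmap C act Q p (H \<inter> conj_sub G g H) H g"

sublocale MT \<subseteq> group G by (rule grp)

context MT
begin

definition nn where "nn = card (carrier G) div card H"

lemma pre: "preadditive C" using add unfolding additive_category_def by (rule conjunct1)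

lemma Xo: "X \<in> cObj C" using ga unfolding group_action_obj_def by (rule conjunct1)
lemma actH: "g \<in> carrier G \<Longrightarrow> act g \<in> cHom C X X"
  using ga unfolding group_action_obj_def by (elim conjE) (erule bspec)
lemma act1: "act \<one> = cId C X"
  using ga unfolding group_action_obj_def by (elim conjE)
lemma actm: "g \<in> carrier G \<Longrightarrow> h \<in> carrier G \<Longrightarrow> act (g \<otimes> h) = cComp C (act g) (act h)"
  using ga unfolding group_action_obj_def by (elim conjE) (simp add: Ball_def)

lemma quoL: "subgroup L G \<Longrightarrow> is_cat_quotient C X act L (Q L) (p L)" using quo by blast

lemma qo: assumes "subgroup L G" shows "Q L \<in> cObj C"
  using quoL[OF assms] unfolding is_cat_quotient_def by (elim conjE)
lemma pH: assumes "subgroup L G" shows "p L \<in> cHom C X (Q L)"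
  using quoL[OF assms] unfolding is_cat_quotient_def by (elim conjE)
lemma pinv: assumes "subgroup L G" "l \<in> L" shows "cComp C (p L) (act l) = p L"
  using quoL[OF assms(1)] assms(2) unfolding is_cat_quotient_def by (elim conjE) (simp add: Ball_def)
lemma puniv: assumes "subgroup L G" "Z \<in> cObj C" "f \<in> cHom C X Z" "\<forall>l\<in>L. cComp C f (act l) = f"
  shows "\<exists>!u. u \<in> cHom C (Q L) Z \<and> cComp C u (p L) = f"
  using quoL[OF assms(1)] assms(2-4) unfolding is_cat_quotient_def by (elim conjE) (simp add: Ball_def)

lemmas cf = cat_facts[OF pre]

lemma quot_ex:
  assumes "subgroup L G" "Z \<in> cObj C" "f \<in> cHom C X Z" "\<And>l. l \<in> L \<Longrightarrow> cComp C f (act l) = f"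
  shows "\<exists>u\<in>cHom C (Q L) Z. cComp C u (p L) = f"
  using puniv[OF assms(1-3)] assms(4) by blast

lemma quot_uniq:
  assumes L: "subgroup L G" and Z: "Z \<in> cObj C" and u: "u \<in> cHom C (Q L) Z" and v: "v \<in> cHom C (Q L) Z"
    and e: "cComp C u (p L) = cComp C v (p L)"
  shows "u = v"
proof -
  have f: "cComp C v (p L) \<in> cHom C X Z" by (rule cf(2)[OF Xo qo[OF L] Z pH[OF L] v])
  have "\<forall>l\<in>L. cComp C (cComp C v (p L)) (act l) = cComp C v (p L)"
  proof
    fix l assume l: "l \<in> L"
    have lc: "l \<in> carrier G" using subgroup.mem_carrier[OF L l] .
    have "cComp C (cComp C v (p L)) (act l) = cComp C v (cComp C (p L) (act l))"
      using cf(3)[OF Xo Xo qo[OF L] Z actH[OF lc] pH[OF L] v] by simp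
    also have "\<dots> = cComp C v (p L)" using pinv[OF L l] by simp
    finally show "cComp C (cComp C v (p L)) (act l) = cComp C v (p L)" .
  qed
  from puniv[OF L Z f this] u v e show ?thesis by blast
qed

lemma qmap_char:
  assumes L: "subgroup L G" and K: "subgroup K G" and g: "g \<in> carrier G"
    and i: "\<And>l. l \<in> L \<Longrightarrow> cComp C (p K) (act (g \<otimes> l)) = cComp C (p K) (act g)"
  shows "qmap C act Q p L K g \<in> cHom C (Q L) (Q K)"
    and "cComp C (qmap C act Q p L K g) (p L) = cComp C (p K) (act g)"
proof -
  have f: "cComp C (p K) (act g) \<in> cHom C X (Q K)" by (rule cf(2)[OF Xo Xo qo[OF K] actH[OF g] pH[OF K]])
  have "\<forall>l\<in>L. cComp C (cComp C (p K) (act g)) (act l) = cComp C (p K) (act g)"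
  proof
    fix l assume l: "l \<in> L"
    have lc: "l \<in> carrier G" using subgroup.mem_carrier[OF L l] .
    have "cComp C (cComp C (p K) (act g)) (act l) = cComp C (p K) (cComp C (act g) (act l))"
      using cf(3)[OF Xo Xo Xo qo[OF K] actH[OF lc] actH[OF g] pH[OF K]] by simp
    also have "\<dots> = cComp C (p K) (act (g \<otimes> l))" using actm[OF g lc] by simp
    also have "\<dots> = cComp C (p K) (act g)" by (rule i[OF l])
    finally show "cComp C (cComp C (p K) (act g)) (act l) = cComp C (p K) (act g)" .
  qed
  note ex1 = puniv[OF L qo[OF K] f this]
  have "qmap C act Q p L K g \<in> cHom C (Q L) (Q K) \<and> cComp C (qmap C act Q p L K g) (p L) = cComp C (p K) (act g)"
    unfolding qmap_def by (rule theI'[OF ex1])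
  thus "qmap C act Q p L K g \<in> cHom C (Q L) (Q K)"
    and "cComp C (qmap C act Q p L K g) (p L) = cComp C (p K) (act g)" by auto
qed

lemma ncancel:
  assumes "A \<in> cObj C" "B \<in> cObj C" "f \<in> cHom C A B" "g \<in> cHom C A B" "nsmul C A B nn f = nsmul C A B nn g"
  shows "f = g"
proof -
  have "bij_betw (nsmul C A B nn) (cHom C A B) (cHom C A B)"
    using ninv assms(1,2) unfolding invertible_in_homs_def nn_def by blast
  hence "inj_on (nsmul C A B nn) (cHom C A B)" by (rule bij_betw_imp_inj_on)
  thus ?thesis by (rule inj_onD[OF _ assms(5) assms(3) assms(4)])
qed

lemma nsurj:
  assumes "A \<in> cObj C" "B \<in> cObj C" "g \<in> cHom C A B"
  shows "\<exists>f\<in>cHom C A B. nsmul C A B nn f = g"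
proof -
  have "bij_betw (nsmul C A B nn) (cHom C A B) (cHom C A B)"
    using ninv assms(1,2) unfolding invertible_in_homs_def nn_def by blast
  hence "nsmul C A B nn ` cHom C A B = cHom C A B" by (rule bij_betw_imp_surj_on)
  thus ?thesis using assms(3) by (metis imageE)
qed

lemma Gsub: "subgroup (carrier G) G" by (rule subgroup_self)

lemma rc_rcosets: "rc G H (carrier G) = rcosets H"
  unfolding rc_def RCOSETS_def by blast

lemma nn_card: "nn = card (rc G H (carrier G))"
proof -
  have l: "card (rcosets H) * card H = order G" by (rule lagrange[OF sH])
  have "finite H" using fin subgroup.subset[OF sH] finite_subset by blast
  moreover have "H \<noteq> {}" using subgroup.one_closed[OF sH] by blast
  ultimately have "card H > 0" by (simp add: card_gt_0_iff)
  hence "card (rcosets H) * card H div card H = card (rcosets H)" by simp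
  thus ?thesis using l unfolding nn_def rc_rcosets order_def by simp
qed

lemma TS_const:
  assumes "A \<in> cObj C" "B \<in> cObj C" "f \<in> cHom C A B"
  shows "TS (HM C A B) G L K (\<lambda>_. f) = nsmul C A B (card (rc G L K)) f"
  unfolding TS_def using comm_monoid.finprod_const[OF HM_cm[OF pre assms(1,2)], of f] assms(3)
    nsmul_pow[OF pre assms] by simp

end

context MT
begin

lemma HM_cong:
  assumes "A \<in> cObj C" "B \<in> cObj C" "g \<in> I \<rightarrow> cHom C A B" "\<And>i. i \<in> I \<Longrightarrow> f i = g i"
  shows "finprod (HM C A B) f I = finprod (HM C A B) g I"
  by (rule comm_monoid.finprod_cong'[OF HM_cm[OF pre assms(1,2)]]) (use assms(3,4) in auto)

lemma TS_closed:
  assumes "A \<in> cObj C" "B \<in> cObj C" "subgroup L G" "subgroup K G" "L \<subseteq> K"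
    "\<And>k. k \<in> K \<Longrightarrow> F k \<in> cHom C A B"
  shows "TS (HM C A B) G L K F \<in> cHom C A B"
proof -
  have "finprod (HM C A B) (\<lambda>c. F (rep c)) (rc G L K) \<in> carrier (HM C A B)"
    by (rule comm_monoid.finprod_closed[OF HM_cm[OF pre assms(1,2)]])
       (use rep_in(2)[OF assms(3,4,5)] assms(6) in auto)
  thus ?thesis unfolding TS_def by simp
qed

lemma TS_cong:
  assumes "A \<in> cObj C" "B \<in> cObj C" "subgroup L G" "subgroup K G" "L \<subseteq> K"
    "\<And>k. k \<in> K \<Longrightarrow> F' k \<in> cHom C A B" "\<And>k. k \<in> K \<Longrightarrow> F k = F' k"
  shows "TS (HM C A B) G L K F = TS (HM C A B) G L K F'"
  unfolding TS_def
  by (rule HM_cong[OF assms(1,2)]) (use rep_in(2)[OF assms(3,4,5)] assms(6,7) in auto)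

lemma TS_comp_left:
  assumes "A \<in> cObj C" "B \<in> cObj C" "D \<in> cObj C" "subgroup L G" "subgroup K G" "L \<subseteq> K"
    "\<And>k. k \<in> K \<Longrightarrow> F k \<in> cHom C A B" "u \<in> cHom C B D"
  shows "cComp C u (TS (HM C A B) G L K F) = TS (HM C A D) G L K (\<lambda>k. cComp C u (F k))"
  unfolding TS_def
  by (rule comp_finprod_left[OF pre assms(1,2,3,8) finite_rc[OF fin assms(5)]])
     (use rep_in(2)[OF assms(4,5,6)] assms(7) in auto)

lemma TS_comp_right:
  assumes "A \<in> cObj C" "B \<in> cObj C" "D \<in> cObj C" "subgroup L G" "subgroup K G" "L \<subseteq> K"
    "\<And>k. k \<in> K \<Longrightarrow> F k \<in> cHom C B D" "v \<in> cHom C A B"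
  shows "cComp C (TS (HM C B D) G L K F) v = TS (HM C A D) G L K (\<lambda>k. cComp C (F k) v)"
  unfolding TS_def
  by (rule comp_finprod_right[OF pre assms(1,2,3,8) finite_rc[OF fin assms(5)]])
     (use rep_in(2)[OF assms(4,5,6)] assms(7) in auto)

lemma carrH: "h \<in> H \<Longrightarrow> h \<in> carrier G" by (rule subgroup.mem_carrier[OF sH])

lemma QHo: "Q H \<in> cObj C" by (rule qo[OF sH])
lemma QGo: "Q (carrier G) \<in> cObj C" by (rule qo[OF Gsub])
lemma pHH: "p H \<in> cHom C X (Q H)" by (rule pH[OF sH])
lemma pGG: "p (carrier G) \<in> cHom C X (Q (carrier G))" by (rule pH[OF Gsub])

lemma pact: assumes "k \<in> carrier G" "subgroup L G" shows "cComp C (p L) (act k) \<in> cHom C X (Q L)"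
  by (rule cf(2)[OF Xo Xo qo[OF assms(2)] actH[OF assms(1)] pH[OF assms(2)]])

lemma pcomp_act:
  assumes "subgroup L G" "x \<in> carrier G" "y \<in> carrier G"
  shows "cComp C (cComp C (p L) (act x)) (act y) = cComp C (p L) (act (x \<otimes> y))"
  using cf(3)[OF Xo Xo Xo qo[OF assms(1)] actH[OF assms(3)] actH[OF assms(2)] pH[OF assms(1)]]
    actm[OF assms(2,3)] by simp

lemma pact1: "subgroup L G \<Longrightarrow> cComp C (p L) (act \<one>) = p L"
  using act1 cf(4)[OF Xo qo pH] by simp

definition tau where "tau = TS (HM C X (Q H)) G H (carrier G) (\<lambda>k. cComp C (p H) (act k))"

lemma Finv: "h \<in> H \<Longrightarrow> x \<in> carrier G \<Longrightarrow> cComp C (p H) (act (h \<otimes> x)) = cComp C (p H) (act x)"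
  using pcomp_act[OF sH carrH] pinv[OF sH] by metis

lemma tau_closed: "tau \<in> cHom C X (Q H)"
  unfolding tau_def by (rule TS_closed[OF Xo QHo sH Gsub subgroup.subset[OF sH]]) (rule pact[OF _ sH])

lemma tau_inv:
  assumes y: "y \<in> carrier G"
  shows "cComp C tau (act y) = tau"
proof -
  have "cComp C tau (act y) = TS (HM C X (Q H)) G H (carrier G) (\<lambda>k. cComp C (cComp C (p H) (act k)) (act y))"
    unfolding tau_def
    by (rule TS_comp_right[OF Xo Xo QHo sH Gsub subgroup.subset[OF sH] pact[OF _ sH] actH[OF y]])
  also have "\<dots> = TS (HM C X (Q H)) G H (carrier G) (\<lambda>k. cComp C (p H) (act (k \<otimes> y)))"
    by (rule TS_cong[OF Xo QHo sH Gsub subgroup.subset[OF sH]])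
       (use pact[OF _ sH] pcomp_act[OF sH _ y] y in auto)
  also have "\<dots> = tau"
    unfolding tau_def
    by (rule TS_rtrans[OF HM_cm[OF pre Xo QHo] sH Gsub subgroup.subset[OF sH] fin])
       (use pact[OF _ sH] Finv y in auto)
  finally show ?thesis .
qed

end

context MT
begin

definition sig where "sig = (SOME u. u \<in> cHom C (Q (carrier G)) (Q H) \<and> cComp C u (p (carrier G)) = tau)"

lemma sig: "sig \<in> cHom C (Q (carrier G)) (Q H)" "cComp C sig (p (carrier G)) = tau"
proof -
  have "\<exists>u\<in>cHom C (Q (carrier G)) (Q H). cComp C u (p (carrier G)) = tau"
    by (rule quot_ex[OF Gsub QHo tau_closed tau_inv])
  hence "\<exists>u. u \<in> cHom C (Q (carrier G)) (Q H) \<and> cComp C u (p (carrier G)) = tau" by blast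
  from someI_ex[OF this] show "sig \<in> cHom C (Q (carrier G)) (Q H)" "cComp C sig (p (carrier G)) = tau"
    unfolding sig_def by auto
qed

definition ss where "ss = (SOME s. s \<in> cHom C (Q (carrier G)) (Q H) \<and> nsmul C (Q (carrier G)) (Q H) nn s = sig)"

lemma ss: "ss \<in> cHom C (Q (carrier G)) (Q H)" "nsmul C (Q (carrier G)) (Q H) nn ss = sig"
proof -
  have "\<exists>s\<in>cHom C (Q (carrier G)) (Q H). nsmul C (Q (carrier G)) (Q H) nn s = sig"
    by (rule nsurj[OF QGo QHo sig(1)])
  hence "\<exists>s. s \<in> cHom C (Q (carrier G)) (Q H) \<and> nsmul C (Q (carrier G)) (Q H) nn s = sig" by blast
  from someI_ex[OF this] show "ss \<in> cHom C (Q (carrier G)) (Q H)" "nsmul C (Q (carrier G)) (Q H) nn ss = sig"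
    unfolding ss_def by auto
qed

definition ee where "ee = qmap C act Q p H (carrier G) \<one>"

lemma ee: "ee \<in> cHom C (Q H) (Q (carrier G))" "cComp C ee (p H) = p (carrier G)"
proof -
  have i: "cComp C (p (carrier G)) (act (\<one> \<otimes> l)) = cComp C (p (carrier G)) (act \<one>)" if "l \<in> H" for l
    using pinv[OF Gsub carrH[OF that]] pact1[OF Gsub] carrH[OF that] by simp
  show "ee \<in> cHom C (Q H) (Q (carrier G))" unfolding ee_def by (rule qmap_char(1)[OF sH Gsub one_closed i])
  show "cComp C ee (p H) = p (carrier G)" unfolding ee_def
    using qmap_char(2)[OF sH Gsub one_closed i] pact1[OF Gsub] by simp
qed

lemma idQ: "A \<in> cObj C \<Longrightarrow> cId C A \<in> cHom C A A" by (rule cf(1))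

lemma es: "cComp C ee ss = cId C (Q (carrier G))"
proof -
  have es_c: "cComp C ee ss \<in> cHom C (Q (carrier G)) (Q (carrier G))"
    by (rule cf(2)[OF QGo QHo QGo ss(1) ee(1)])
  have esig_c: "cComp C ee sig \<in> cHom C (Q (carrier G)) (Q (carrier G))"
    by (rule cf(2)[OF QGo QHo QGo sig(1) ee(1)])
  have nid_c: "nsmul C (Q (carrier G)) (Q (carrier G)) nn (cId C (Q (carrier G))) \<in> cHom C (Q (carrier G)) (Q (carrier G))"
    by (rule nsmul_closed[OF pre QGo QGo idQ[OF QGo]])
  have A1: "nsmul C (Q (carrier G)) (Q (carrier G)) nn (cComp C ee ss) = cComp C ee sig"
    using comp_nsmul_left[OF pre QGo QHo QGo ee(1) ss(1), of nn] ss(2) by simp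
  have "cComp C (cComp C ee sig) (p (carrier G)) = cComp C ee tau"
    using cf(3)[OF Xo QGo QHo QGo pGG sig(1) ee(1)] sig(2) by simp
  also have "\<dots> = TS (HM C X (Q (carrier G))) G H (carrier G) (\<lambda>k. cComp C ee (cComp C (p H) (act k)))"
    unfolding tau_def
    by (rule TS_comp_left[OF Xo QHo QGo sH Gsub subgroup.subset[OF sH] pact[OF _ sH] ee(1)])
  also have "\<dots> = TS (HM C X (Q (carrier G))) G H (carrier G) (\<lambda>k. p (carrier G))"
  proof (rule TS_cong[OF Xo QGo sH Gsub subgroup.subset[OF sH]])
    fix k assume k: "k \<in> carrier G"
    show "p (carrier G) \<in> cHom C X (Q (carrier G))" by (rule pGG)
    have "cComp C ee (cComp C (p H) (act k)) = cComp C (cComp C ee (p H)) (act k)"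
      by (rule cf(3)[OF Xo Xo QHo QGo actH[OF k] pHH ee(1)])
    also have "\<dots> = p (carrier G)" using ee(2) pinv[OF Gsub k] by simp
    finally show "cComp C ee (cComp C (p H) (act k)) = p (carrier G)" .
  qed
  also have "\<dots> = nsmul C X (Q (carrier G)) nn (p (carrier G))"
    using TS_const[OF Xo QGo pGG] nn_card by simp
  also have "\<dots> = cComp C (nsmul C (Q (carrier G)) (Q (carrier G)) nn (cId C (Q (carrier G)))) (p (carrier G))"
    using comp_nsmul_right[OF pre Xo QGo QGo pGG idQ[OF QGo], of nn] cf(5)[OF Xo QGo pGG] by simp
  finally have "cComp C ee sig = nsmul C (Q (carrier G)) (Q (carrier G)) nn (cId C (Q (carrier G)))"
    by (rule quot_uniq[OF Gsub QGo esig_c nid_c])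
  thus ?thesis using A1 by (intro ncancel[OF QGo QGo es_c idQ[OF QGo]]) simp
qed

lemma Lsub: "g \<in> carrier G \<Longrightarrow> subgroup (Lg G H g) G" by (rule Lg_subgroup[OF sH])
lemma LH: "Lg G H g \<subseteq> H" unfolding Lg_def by blast
lemma QLo: "g \<in> carrier G \<Longrightarrow> Q (Lg G H g) \<in> cObj C" by (rule qo[OF Lsub])

lemma Po: "P \<in> cObj C" using cop unfolding is_coproduct_def by (elim conjE)
lemma iota: "g \<in> carrier G \<Longrightarrow> \<iota> g \<in> cHom C (Q (Lg G H g)) P"
  using cop unfolding is_coproduct_def Lg_def by (elim conjE) (simp add: Ball_def)
lemma cop_uniq:
  assumes Z: "Z \<in> cObj C" and u: "u \<in> cHom C P Z" and v: "v \<in> cHom C P Z"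
    and e: "\<And>g. g \<in> carrier G \<Longrightarrow> cComp C u (\<iota> g) = cComp C v (\<iota> g)"
  shows "u = v"
proof -
  have U: "\<forall>Z\<in>cObj C. \<forall>f. (\<forall>i\<in>carrier G. f i \<in> cHom C (Q (H \<inter> conj_sub G i H)) Z) \<longrightarrow>
        (\<exists>!u. u \<in> cHom C P Z \<and> (\<forall>i\<in>carrier G. cComp C u (\<iota> i) = f i))"
    using cop unfolding is_coproduct_def by (elim conjE)
  have f: "\<forall>i\<in>carrier G. cComp C v (\<iota> i) \<in> cHom C (Q (H \<inter> conj_sub G i H)) Z"
    using cf(2)[OF QLo Po Z iota v] unfolding Lg_def by blast
  have "\<exists>!w. w \<in> cHom C P Z \<and> (\<forall>i\<in>carrier G. cComp C w (\<iota> i) = cComp C v (\<iota> i))"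
    by (rule U[rule_format, OF Z f[rule_format]])
  thus ?thesis using u v e by blast
qed

lemma q1:
  assumes g: "g \<in> carrier G"
  shows "cComp C d0 (\<iota> g) \<in> cHom C (Q (Lg G H g)) (Q H)"
    "cComp C (cComp C d0 (\<iota> g)) (p (Lg G H g)) = cComp C (p H) (act \<one>)"
proof -
  have eq: "cComp C d0 (\<iota> g) = qmap C act Q p (Lg G H g) H \<one>" using d0i g unfolding Lg_def by blast
  have i: "cComp C (p H) (act (\<one> \<otimes> l)) = cComp C (p H) (act \<one>)" if "l \<in> Lg G H g" for l
  proof -
    have lH: "l \<in> H" using that LH by blast
    show ?thesis using pinv[OF sH lH] pact1[OF sH] carrH[OF lH] by simp
  qed
  show "cComp C d0 (\<iota> g) \<in> cHom C (Q (Lg G H g)) (Q H)"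
    unfolding eq by (rule qmap_char(1)[OF Lsub[OF g] sH one_closed i])
  show "cComp C (cComp C d0 (\<iota> g)) (p (Lg G H g)) = cComp C (p H) (act \<one>)"
    unfolding eq by (rule qmap_char(2)[OF Lsub[OF g] sH one_closed i])
qed

lemma qg:
  assumes g: "g \<in> carrier G"
  shows "cComp C d1 (\<iota> g) \<in> cHom C (Q (Lg G H g)) (Q H)"
    "cComp C (cComp C d1 (\<iota> g)) (p (Lg G H g)) = cComp C (p H) (act g)"
proof -
  have eq: "cComp C d1 (\<iota> g) = qmap C act Q p (Lg G H g) H g" using d1i g unfolding Lg_def by blast
  have i: "cComp C (p H) (act (g \<otimes> l)) = cComp C (p H) (act g)" if "l \<in> Lg G H g" for l
  proof -
    have lm: "l \<in> H" "g \<otimes> l \<otimes> inv g \<in> H" using Lg_mem[OF sH g] that by auto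
    have lc: "l \<in> carrier G" using carrH[OF lm(1)] .
    have "g \<otimes> l = (g \<otimes> l \<otimes> inv g) \<otimes> g" using g lc by (simp add: m_assoc)
    thus ?thesis using Finv[OF lm(2) g] by simp
  qed
  show "cComp C d1 (\<iota> g) \<in> cHom C (Q (Lg G H g)) (Q H)"
    unfolding eq by (rule qmap_char(1)[OF Lsub[OF g] sH g i])
  show "cComp C (cComp C d1 (\<iota> g)) (p (Lg G H g)) = cComp C (p H) (act g)"
    unfolding eq by (rule qmap_char(2)[OF Lsub[OF g] sH g i])
qed

definition taug where
  "taug g = TS (HM C X (Q (Lg G H g))) G (Lg G H g) H (\<lambda>h. cComp C (p (Lg G H g)) (act h))"

lemma taug_closed: assumes g: "g \<in> carrier G" shows "taug g \<in> cHom C X (Q (Lg G H g))"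
  unfolding taug_def by (rule TS_closed[OF Xo QLo[OF g] Lsub[OF g] sH LH]) (rule pact[OF carrH Lsub[OF g]])

lemma taug_inv:
  assumes g: "g \<in> carrier G" and y: "y \<in> H"
  shows "cComp C (taug g) (act y) = taug g"
proof -
  note L = Lsub[OF g]
  have yc: "y \<in> carrier G" using carrH[OF y] .
  have "cComp C (taug g) (act y) = TS (HM C X (Q (Lg G H g))) G (Lg G H g) H (\<lambda>k. cComp C (cComp C (p (Lg G H g)) (act k)) (act y))"
    unfolding taug_def
    by (rule TS_comp_right[OF Xo Xo QLo[OF g] L sH LH pact[OF carrH L] actH[OF yc]])
  also have "\<dots> = TS (HM C X (Q (Lg G H g))) G (Lg G H g) H (\<lambda>k. cComp C (p (Lg G H g)) (act (k \<otimes> y)))"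
    by (rule TS_cong[OF Xo QLo[OF g] L sH LH])
       (use pact[OF _ L] pcomp_act[OF L carrH yc] carrH subgroup.m_closed[OF sH _ y] in auto)
  also have "\<dots> = taug g"
    unfolding taug_def
  proof (rule TS_rtrans[OF HM_cm[OF pre Xo QLo[OF g]] L sH LH fin])
    show "(\<lambda>x. cComp C (p (Lg G H g)) (act x)) \<in> H \<rightarrow> carrier (HM C X (Q (Lg G H g)))"
      using pact[OF carrH L] by auto
    show "y \<in> H" by (rule y)
    fix l x assume l: "l \<in> Lg G H g" and x: "x \<in> H"
    have lc: "l \<in> carrier G" using l LH carrH by blast
    show "cComp C (p (Lg G H g)) (act (l \<otimes> x)) = cComp C (p (Lg G H g)) (act x)"
      using pcomp_act[OF L lc carrH[OF x]] pinv[OF L l] by simp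
  qed
  finally show ?thesis .
qed

definition tt where "tt g = (SOME u. u \<in> cHom C (Q H) (Q (Lg G H g)) \<and> cComp C u (p H) = taug g)"

lemma tt:
  assumes g: "g \<in> carrier G"
  shows "tt g \<in> cHom C (Q H) (Q (Lg G H g))" "cComp C (tt g) (p H) = taug g"
proof -
  have "\<exists>u\<in>cHom C (Q H) (Q (Lg G H g)). cComp C u (p H) = taug g"
    by (rule quot_ex[OF sH QLo[OF g] taug_closed[OF g] taug_inv[OF g]])
  hence "\<exists>u. u \<in> cHom C (Q H) (Q (Lg G H g)) \<and> cComp C u (p H) = taug g" by blast
  from someI_ex[OF this] show "tt g \<in> cHom C (Q H) (Q (Lg G H g))" "cComp C (tt g) (p H) = taug g"
    unfolding tt_def by auto
qed

lemma per_D: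
  assumes g: "g \<in> carrier G" and a: "a \<in> carrier G" and d: "d \<in> cHom C P (Q H)"
    and q: "cComp C d (\<iota> g) \<in> cHom C (Q (Lg G H g)) (Q H)"
    and qp: "cComp C (cComp C d (\<iota> g)) (p (Lg G H g)) = cComp C (p H) (act a)"
  shows "cComp C (cComp C d (cComp C (\<iota> g) (tt g))) (p H)
         = TS (HM C X (Q H)) G (Lg G H g) H (\<lambda>h. cComp C (p H) (act (a \<otimes> h)))"
proof -
  note L = Lsub[OF g]
  let ?q = "cComp C d (\<iota> g)"
  have "cComp C d (cComp C (\<iota> g) (tt g)) = cComp C ?q (tt g)"
    by (rule cf(3)[OF QHo QLo[OF g] Po QHo tt(1)[OF g] iota[OF g] d])
  hence "cComp C (cComp C d (cComp C (\<iota> g) (tt g))) (p H) = cComp C (cComp C ?q (tt g)) (p H)" by simp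
  also have "\<dots> = cComp C ?q (cComp C (tt g) (p H))"
    by (rule cf(3)[OF Xo QHo QLo[OF g] QHo pHH tt(1)[OF g] q, symmetric])
  also have "\<dots> = cComp C ?q (taug g)" using tt(2)[OF g] by simp
  also have "\<dots> = TS (HM C X (Q H)) G (Lg G H g) H (\<lambda>h. cComp C ?q (cComp C (p (Lg G H g)) (act h)))"
    unfolding taug_def by (rule TS_comp_left[OF Xo QLo[OF g] QHo L sH LH pact[OF carrH L] q])
  also have "\<dots> = TS (HM C X (Q H)) G (Lg G H g) H (\<lambda>h. cComp C (p H) (act (a \<otimes> h)))"
  proof (rule TS_cong[OF Xo QHo L sH LH])
    fix h assume h: "h \<in> H"
    have hc: "h \<in> carrier G" using carrH[OF h] .
    show "cComp C (p H) (act (a \<otimes> h)) \<in> cHom C X (Q H)" by (rule pact[OF m_closed[OF a hc] sH])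
    have "cComp C ?q (cComp C (p (Lg G H g)) (act h)) = cComp C (cComp C ?q (p (Lg G H g))) (act h)"
      by (rule cf(3)[OF Xo Xo QLo[OF g] QHo actH[OF hc] pH[OF L] q])
    also have "\<dots> = cComp C (p H) (act (a \<otimes> h))" using qp pcomp_act[OF sH a hc] by simp
    finally show "cComp C ?q (cComp C (p (Lg G H g)) (act h)) = cComp C (p H) (act (a \<otimes> h))" .
  qed
  finally show ?thesis .
qed

end

context MT
begin

lemma repDC:
  assumes "D \<in> DCo G H ` carrier G"
  shows "rep D \<in> carrier G"
proof -
  from assms obtain x where x1: "D = DCo G H x" and x2: "x \<in> carrier G" by (rule imageE)
  have "rep D \<in> D" unfolding rep_def by (rule someI[of _ x]) (use DCo_self[OF sH x2] x1 in simp)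
  thus ?thesis using DCo_carrier[OF sH x2] x1 by blast
qed

lemma finDC: "finite (DCo G H ` carrier G)" using fin by simp

definition YY where
  "YY = finprod (HM C (Q H) P) (\<lambda>D. cComp C (\<iota> (rep D)) (tt (rep D))) (DCo G H ` carrier G)"

lemma fc: "(\<lambda>D. cComp C (\<iota> (rep D)) (tt (rep D))) \<in> DCo G H ` carrier G \<rightarrow> cHom C (Q H) P"
  using cf(2)[OF QHo QLo[OF repDC] Po tt(1)[OF repDC] iota[OF repDC]] by blast

lemma YY_closed: "YY \<in> cHom C (Q H) P"
proof -
  have "(\<lambda>D. cComp C (\<iota> (rep D)) (tt (rep D))) \<in> DCo G H ` carrier G \<rightarrow> carrier (HM C (Q H) P)"
    using fc by simp
  from comm_monoid.finprod_closed[OF HM_cm[OF pre QHo Po] this] show ?thesis unfolding YY_def by simp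
qed

lemma dY:
  assumes d: "d \<in> cHom C P (Q H)"
  shows "cComp C (cComp C d YY) (p H) =
     finprod (HM C X (Q H)) (\<lambda>D. cComp C (cComp C d (cComp C (\<iota> (rep D)) (tt (rep D)))) (p H)) (DCo G H ` carrier G)"
proof -
  have fc2: "(\<lambda>D. cComp C d (cComp C (\<iota> (rep D)) (tt (rep D)))) \<in> DCo G H ` carrier G \<rightarrow> cHom C (Q H) (Q H)"
    using fc cf(2)[OF QHo Po QHo _ d] by blast
  have "cComp C d YY = finprod (HM C (Q H) (Q H)) (\<lambda>D. cComp C d (cComp C (\<iota> (rep D)) (tt (rep D)))) (DCo G H ` carrier G)"
    unfolding YY_def by (rule comp_finprod_left[OF pre QHo Po QHo d finDC fc])
  thus ?thesis using comp_finprod_right[OF pre Xo QHo QHo pHH finDC fc2] by simp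
qed

lemma d0Y: "cComp C d0 YY = nsmul C (Q H) (Q H) nn (cId C (Q H))"
proof -
  have c1: "cComp C d0 YY \<in> cHom C (Q H) (Q H)" by (rule cf(2)[OF QHo Po QHo YY_closed d0])
  have c2: "nsmul C (Q H) (Q H) nn (cId C (Q H)) \<in> cHom C (Q H) (Q H)"
    by (rule nsmul_closed[OF pre QHo QHo idQ[OF QHo]])
  have "cComp C (cComp C d0 YY) (p H) =
     finprod (HM C X (Q H)) (\<lambda>D. cComp C (cComp C d0 (cComp C (\<iota> (rep D)) (tt (rep D)))) (p H)) (DCo G H ` carrier G)"
    by (rule dY[OF d0])
  also have "\<dots> = finprod (HM C X (Q H)) (\<lambda>D. TS (HM C X (Q H)) G (Lg G H (rep D)) H (\<lambda>h. p H)) (DCo G H ` carrier G)"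
  proof (rule HM_cong[OF Xo QHo])
    show "(\<lambda>D. TS (HM C X (Q H)) G (Lg G H (rep D)) H (\<lambda>h. p H)) \<in> DCo G H ` carrier G \<rightarrow> cHom C X (Q H)"
      using TS_closed[OF Xo QHo Lsub[OF repDC] sH LH pHH] by blast
    fix D assume D: "D \<in> DCo G H ` carrier G"
    note g = repDC[OF D]
    have "cComp C (cComp C d0 (cComp C (\<iota> (rep D)) (tt (rep D)))) (p H)
        = TS (HM C X (Q H)) G (Lg G H (rep D)) H (\<lambda>h. cComp C (p H) (act (\<one> \<otimes> h)))"
      by (rule per_D[OF g one_closed d0 q1(1)[OF g] q1(2)[OF g]])
    also have "\<dots> = TS (HM C X (Q H)) G (Lg G H (rep D)) H (\<lambda>h. p H)"
      by (rule TS_cong[OF Xo QHo Lsub[OF g] sH LH pHH]) (use pinv[OF sH] carrH in simp)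
    finally show "cComp C (cComp C d0 (cComp C (\<iota> (rep D)) (tt (rep D)))) (p H)
        = TS (HM C X (Q H)) G (Lg G H (rep D)) H (\<lambda>h. p H)" .
  qed
  also have "\<dots> = TS (HM C X (Q H)) G H (carrier G) (\<lambda>k. p H)"
    by (rule core_identity[OF HM_cm[OF pre Xo QHo] fin sH, of "\<lambda>k. p H", simplified])
       (use pHH in auto)
  also have "\<dots> = nsmul C X (Q H) nn (p H)"
    using TS_const[OF Xo QHo pHH] nn_card by simp
  also have "\<dots> = cComp C (nsmul C (Q H) (Q H) nn (cId C (Q H))) (p H)"
    using comp_nsmul_right[OF pre Xo QHo QHo pHH idQ[OF QHo], of nn] cf(5)[OF Xo QHo pHH] by simp
  finally show ?thesis by (rule quot_uniq[OF sH QHo c1 c2])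
qed

lemma d1Y: "cComp C d1 YY = nsmul C (Q H) (Q H) nn (cComp C ss ee)"
proof -
  have c1: "cComp C d1 YY \<in> cHom C (Q H) (Q H)" by (rule cf(2)[OF QHo Po QHo YY_closed d1])
  have se: "cComp C ss ee \<in> cHom C (Q H) (Q H)" by (rule cf(2)[OF QHo QGo QHo ee(1) ss(1)])
  have c2: "nsmul C (Q H) (Q H) nn (cComp C ss ee) \<in> cHom C (Q H) (Q H)"
    by (rule nsmul_closed[OF pre QHo QHo se])
  have "cComp C (cComp C d1 YY) (p H) =
     finprod (HM C X (Q H)) (\<lambda>D. cComp C (cComp C d1 (cComp C (\<iota> (rep D)) (tt (rep D)))) (p H)) (DCo G H ` carrier G)"
    by (rule dY[OF d1])
  also have "\<dots> = finprod (HM C X (Q H)) (\<lambda>D. TS (HM C X (Q H)) G (Lg G H (rep D)) H (\<lambda>h. cComp C (p H) (act (rep D \<otimes> h)))) (DCo G H ` carrier G)"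
  proof (rule HM_cong[OF Xo QHo])
    show "(\<lambda>D. TS (HM C X (Q H)) G (Lg G H (rep D)) H (\<lambda>h. cComp C (p H) (act (rep D \<otimes> h)))) \<in> DCo G H ` carrier G \<rightarrow> cHom C X (Q H)"
    proof
      fix D assume D: "D \<in> DCo G H ` carrier G"
      note g = repDC[OF D]
      show "TS (HM C X (Q H)) G (Lg G H (rep D)) H (\<lambda>h. cComp C (p H) (act (rep D \<otimes> h))) \<in> cHom C X (Q H)"
        by (rule TS_closed[OF Xo QHo Lsub[OF g] sH LH pact[OF m_closed[OF g carrH] sH]])
    qed
    fix D assume D: "D \<in> DCo G H ` carrier G"
    note g = repDC[OF D]
    show "cComp C (cComp C d1 (cComp C (\<iota> (rep D)) (tt (rep D)))) (p H)
        = TS (HM C X (Q H)) G (Lg G H (rep D)) H (\<lambda>h. cComp C (p H) (act (rep D \<otimes> h)))"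
      by (rule per_D[OF g g d1 qg(1)[OF g] qg(2)[OF g]])
  qed
  also have "\<dots> = TS (HM C X (Q H)) G H (carrier G) (\<lambda>k. cComp C (p H) (act k))"
    by (rule core_identity[OF HM_cm[OF pre Xo QHo] fin sH, of "\<lambda>k. cComp C (p H) (act k)"])
       (use pact[OF _ sH] Finv in auto)
  also have "\<dots> = cComp C sig (p (carrier G))" using sig(2) unfolding tau_def by simp
  also have "\<dots> = nsmul C X (Q H) nn (cComp C ss (p (carrier G)))"
    using comp_nsmul_right[OF pre Xo QGo QHo pGG ss(1), of nn] ss(2) by simp
  also have "\<dots> = nsmul C X (Q H) nn (cComp C (cComp C ss ee) (p H))"
    using cf(3)[OF Xo QHo QGo QHo pHH ee(1) ss(1)] ee(2) by simp
  also have "\<dots> = cComp C (nsmul C (Q H) (Q H) nn (cComp C ss ee)) (p H)"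
    using comp_nsmul_right[OF pre Xo QHo QHo pHH se, of nn] by simp
  finally show ?thesis by (rule quot_uniq[OF sH QHo c1 c2])
qed

lemma fork: "cComp C ee d0 = cComp C ee d1"
proof (rule cop_uniq[OF QGo cf(2)[OF Po QHo QGo d0 ee(1)] cf(2)[OF Po QHo QGo d1 ee(1)]])
  fix g assume g: "g \<in> carrier G"
  note L = Lsub[OF g]
  have a: "cComp C (cComp C ee d0) (\<iota> g) = cComp C ee (cComp C d0 (\<iota> g))"
    by (rule cf(3)[OF QLo[OF g] Po QHo QGo iota[OF g] d0 ee(1), symmetric])
  have b: "cComp C (cComp C ee d1) (\<iota> g) = cComp C ee (cComp C d1 (\<iota> g))"
    by (rule cf(3)[OF QLo[OF g] Po QHo QGo iota[OF g] d1 ee(1), symmetric])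
  have u1: "cComp C ee (cComp C d0 (\<iota> g)) \<in> cHom C (Q (Lg G H g)) (Q (carrier G))"
    by (rule cf(2)[OF QLo[OF g] QHo QGo q1(1)[OF g] ee(1)])
  have u2: "cComp C ee (cComp C d1 (\<iota> g)) \<in> cHom C (Q (Lg G H g)) (Q (carrier G))"
    by (rule cf(2)[OF QLo[OF g] QHo QGo qg(1)[OF g] ee(1)])
  have "cComp C (cComp C ee (cComp C d0 (\<iota> g))) (p (Lg G H g)) = cComp C ee (cComp C (cComp C d0 (\<iota> g)) (p (Lg G H g)))"
    by (rule cf(3)[OF Xo QLo[OF g] QHo QGo pH[OF L] q1(1)[OF g] ee(1), symmetric])
  also have "\<dots> = p (carrier G)" using q1(2)[OF g] pact1[OF sH] ee(2) by simp
  also have "\<dots> = cComp C (cComp C ee (p H)) (act g)" using ee(2) pinv[OF Gsub g] by simp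
  also have "\<dots> = cComp C ee (cComp C (p H) (act g))"
    by (rule cf(3)[OF Xo Xo QHo QGo actH[OF g] pHH ee(1), symmetric])
  also have "\<dots> = cComp C ee (cComp C (cComp C d1 (\<iota> g)) (p (Lg G H g)))" using qg(2)[OF g] by simp
  also have "\<dots> = cComp C (cComp C ee (cComp C d1 (\<iota> g))) (p (Lg G H g))"
    by (rule cf(3)[OF Xo QLo[OF g] QHo QGo pH[OF L] qg(1)[OF g] ee(1)])
  finally have "cComp C ee (cComp C d0 (\<iota> g)) = cComp C ee (cComp C d1 (\<iota> g))"
    by (rule quot_uniq[OF L QGo u1 u2])
  thus "cComp C (cComp C ee d0) (\<iota> g) = cComp C (cComp C ee d1) (\<iota> g)" using a b by simp
qed

lemma main: "split_fork C P (Q H) (Q (carrier G)) d0 d1 (qmap C act Q p H (carrier G) \<one>)"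
proof -
  obtain t where t: "t \<in> cHom C (Q H) P" "nsmul C (Q H) P nn t = YY"
    using nsurj[OF QHo Po YY_closed] by blast
  have d0t: "cComp C d0 t = cId C (Q H)"
  proof (rule ncancel[OF QHo QHo cf(2)[OF QHo Po QHo t(1) d0] idQ[OF QHo]])
    show "nsmul C (Q H) (Q H) nn (cComp C d0 t) = nsmul C (Q H) (Q H) nn (cId C (Q H))"
      using comp_nsmul_left[OF pre QHo Po QHo d0 t(1), of nn] t(2) d0Y by simp
  qed
  have d1t: "cComp C d1 t = cComp C ss ee"
  proof (rule ncancel[OF QHo QHo cf(2)[OF QHo Po QHo t(1) d1] cf(2)[OF QHo QGo QHo ee(1) ss(1)]])
    show "nsmul C (Q H) (Q H) nn (cComp C d1 t) = nsmul C (Q H) (Q H) nn (cComp C ss ee)"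
      using comp_nsmul_left[OF pre QHo Po QHo d1 t(1), of nn] t(2) d1Y by simp
  qed
  have ex: "\<exists>s\<in>cHom C (Q (carrier G)) (Q H). \<exists>t\<in>cHom C (Q H) P.
       cComp C ee s = cId C (Q (carrier G)) \<and> cComp C d0 t = cId C (Q H) \<and> cComp C d1 t = cComp C s ee"
    using ss(1) t(1) es d0t d1t by blast
  show ?thesis unfolding split_fork_def ee_def[symmetric]
    using d0 d1 ee(1) fork ex by (intro conjI)
qed

end

theorem mainTheorem13:
  fixes C :: "('o, 'm) addcat" and G :: "('g, 'b) monoid_scheme"
    and X :: 'o and act :: "'g \<Rightarrow> 'm" and H :: "'g set"
    and Q :: "'g set \<Rightarrow> 'o" and p :: "'g set \<Rightarrow> 'm"
    and P :: 'o and \<iota> :: "'g \<Rightarrow> 'm" and d0 d1 :: 'm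
  assumes "additive_category C"
    and "group G" and "finite (carrier G)"
    and "group_action_obj C G X act"
    and "subgroup H G"
    and "invertible_in_homs C (card (carrier G) div card H)"
    and "\<forall>L. subgroup L G \<longrightarrow> is_cat_quotient C X act L (Q L) (p L)"
    and "is_coproduct C (carrier G) (\<lambda>g. Q (H \<inter> conj_sub G g H)) P \<iota>"
    and "d0 \<in> cHom C P (Q H)" and "d1 \<in> cHom C P (Q H)"
    and "\<forall>g\<in>carrier G. cComp C d0 (\<iota> g) = qmap C act Q p (H \<inter> conj_sub G g H) H \<one>\<^bsub>G\<^esub>"
    and "\<forall>g\<in>carrier G. cComp C d1 (\<iota> g) = qmap C act Q p (H \<inter> conj_sub G g H) H g"
  shows "split_fork C P (Q H) (Q (carrier G)) d0 d1 (qmap C act Q p H (carrier G) \<one>\<^bsub>G\<^esub>)"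
proof -
  have "MT C G X act H Q p P \<iota> d0 d1"
    by (rule MT.intro) (rule assms)+
  then show ?thesis by (rule MT.main)
qed

end
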